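(* Let $H$ be the native RKHS of the Gaussian RBF kernel on $\mathbb{R}^n$, and let $F : \mathbb{R}^n \to \mathbb{R}^n$. Suppose the Koopman operator $\mathcal{K}_F g = g \circ F$ maps all of $H$ into $H$ and is bounded. Then every component of $F$ is a real analytic function on $\mathbb{R}^n$.
   Context: The Gaussian RBF kernel on $\mathbb{R}^n$ is $K(x,y) = \exp\!\left(-\|x-y\|_2^2/2\right)$. Its native space is the real RKHS of functions on $\mathbb{R}^n$ having this reproducing kernel. Every function in this space is real analytic on $\mathbb{R}^n$. *)

theory Defs
  imports "HOL-Analysis.Analysis"
begin

definition gauss_kernel :: "real ^ 'n \<Rightarrow> real ^ 'n \<Rightarrow> real" where
  "gauss_kernel x y = exp (- (norm (x - y))\<^sup>2 / 2)"

definition is_rkhs ::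
  "('a \<Rightarrow> 'a \<Rightarrow> real) \<Rightarrow> ('a \<Rightarrow> real) set \<Rightarrow> (('a \<Rightarrow> real) \<Rightarrow> ('a \<Rightarrow> real) \<Rightarrow> real) \<Rightarrow> bool" where
  "is_rkhs K H ip \<longleftrightarrow>
     (\<lambda>x. 0) \<in> H \<and>
     (\<forall>f\<in>H. \<forall>g\<in>H. (\<lambda>x. f x + g x) \<in> H) \<and>
     (\<forall>c. \<forall>f\<in>H. (\<lambda>x. c * f x) \<in> H) \<and>
     (\<forall>f\<in>H. \<forall>g\<in>H. ip f g = ip g f) \<and>
     (\<forall>f\<in>H. \<forall>g\<in>H. \<forall>h\<in>H. ip (\<lambda>x. f x + g x) h = ip f h + ip g h) \<and>
     (\<forall>c. \<forall>f\<in>H. \<forall>g\<in>H. ip (\<lambda>x. c * f x) g = c * ip f g) \<and>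
     (\<forall>f\<in>H. 0 \<le> ip f f) \<and>
     (\<forall>f\<in>H. ip f f = 0 \<longrightarrow> f = (\<lambda>x. 0)) \<and>
     (\<forall>X. (\<forall>k. X k \<in> H) \<and>
          (\<forall>e>0. \<exists>N. \<forall>m\<ge>N. \<forall>k\<ge>N.
              sqrt (ip (\<lambda>x. X m x - X k x) (\<lambda>x. X m x - X k x)) < e)
        \<longrightarrow> (\<exists>f\<in>H. (\<lambda>k. sqrt (ip (\<lambda>x. X k x - f x) (\<lambda>x. X k x - f x))) \<longlonglongrightarrow> 0)) \<and>
     (\<forall>y. (\<lambda>x. K x y) \<in> H) \<and>
     (\<forall>f\<in>H. \<forall>y. ip f (\<lambda>x. K x y) = f y)"

text \<open>Real analyticity on a set S of R^n: near every point a of S, f is the sum of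
  an (unconditionally, i.e. absolutely) convergent multivariate power series
  centred at a, indexed by multi-indices alpha :: 'n => nat.\<close>
definition real_analytic_on :: "(real ^ 'n \<Rightarrow> real) \<Rightarrow> (real ^ 'n) set \<Rightarrow> bool" where
  "real_analytic_on f S \<longleftrightarrow>
     (\<forall>a\<in>S. \<exists>r>0. \<exists>c :: ('n \<Rightarrow> nat) \<Rightarrow> real.
        \<forall>x\<in>ball a r.
          ((\<lambda>\<alpha>. c \<alpha> * (\<Prod>i\<in>UNIV. (x $ i - a $ i) ^ \<alpha> i)) has_sum f x) UNIV)"

end

theory Submission
  imports Defs "HOL-Library.Function_Algebras"
begin


definition mmono :: "real^'n \<Rightarrow> ('n \<Rightarrow> nat) \<Rightarrow> real" where
  "mmono x g = (\<Prod>i\<in>UNIV. (x$i) ^ (g i))"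

definition mfact :: "('n::finite \<Rightarrow> nat) \<Rightarrow> real" where
  "mfact g = (\<Prod>i\<in>UNIV. fact (g i))"

lemma mfact_pos: "mfact g > 0"
  unfolding mfact_def by (intro prod_pos) auto

lemma mmono_add: "mmono x (a + b) = mmono x a * mmono x b"
  unfolding mmono_def by (simp add: power_add prod.distrib)

lemma mmono_zero_idx[simp]: "mmono x 0 = 1"
  unfolding mmono_def by simp

lemma abs_mmono: "\<bar>mmono x g\<bar> = mmono (\<chi> i. \<bar>x$i\<bar>) g"
  unfolding mmono_def by (simp add: abs_prod power_abs)

lemma abs_summable_prod_multi:
  fixes f :: "'n::finite \<Rightarrow> nat \<Rightarrow> real"
  assumes "\<And>i. (\<lambda>zz. norm (f i zz)) summable_on UNIV"
  shows "(\<lambda>g::'n\<Rightarrow>nat. norm (\<Prod>i\<in>UNIV. f i (g i))) summable_on UNIV"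
proof (rule nonneg_bdd_above_summable_on)
  define s where "s i = infsum (\<lambda>k. norm (f i k)) UNIV" for i
  show "bdd_above (sum (\<lambda>g. norm (\<Prod>i\<in>UNIV. f i (g i))) ` {F. F \<subseteq> UNIV \<and> finite F})"
  proof (rule bdd_aboveI2)
    fix P :: "('n \<Rightarrow> nat) set" assume "P \<in> {F. F \<subseteq> UNIV \<and> finite F}"
    hence fin: "finite P" by auto
    define B where "B i = (\<lambda>g. g i) ` P" for i
    have finB: "finite (B i)" for i using fin by (simp add: B_def)
    have sub: "P \<subseteq> PiE UNIV B" by (auto simp: B_def PiE_UNIV_domain)
    have "(\<Sum>g\<in>P. norm (\<Prod>i\<in>UNIV. f i (g i))) \<le> (\<Sum>g\<in>PiE UNIV B. norm (\<Prod>i\<in>UNIV. f i (g i)))"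
      by (rule sum_mono2) (auto simp: finite_PiE finB sub)
    also have "\<dots> = (\<Sum>g\<in>PiE UNIV B. \<Prod>i\<in>UNIV. norm (f i (g i)))"
      by (simp add: abs_prod)
    also have "\<dots> = (\<Prod>i\<in>UNIV. \<Sum>k\<in>B i. norm (f i k))"
      by (rule prod_sum_PiE[symmetric]) (auto simp: finB)
    also have "\<dots> \<le> (\<Prod>i\<in>UNIV. s i)"
    proof (rule prod_mono, rule conjI)
      fix i :: 'n
      show "0 \<le> (\<Sum>k\<in>B i. norm (f i k))" by (simp add: sum_nonneg)
      show "(\<Sum>k\<in>B i. norm (f i k)) \<le> s i"
        unfolding s_def using finite_sum_le_has_sum[OF has_sum_infsum[OF assms(1)[of i]] finB[of i]] by auto
    qed
    finally show "(\<Sum>g\<in>P. norm (\<Prod>i\<in>UNIV. f i (g i))) \<le> (\<Prod>i\<in>UNIV. s i)" .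
  qed
qed auto

lemma has_sum_prod_multi:
  fixes f :: "'n::finite \<Rightarrow> nat \<Rightarrow> real"
  assumes "\<And>i. (\<lambda>zz. norm (f i zz)) summable_on UNIV"
    and "\<And>i. (f i has_sum s i) UNIV"
  shows "((\<lambda>g::'n\<Rightarrow>nat. \<Prod>i\<in>UNIV. f i (g i)) has_sum (\<Prod>i\<in>UNIV. s i)) UNIV"
proof -
  have sm: "(\<lambda>g::'n\<Rightarrow>nat. \<Prod>i\<in>UNIV. f i (g i)) summable_on UNIV"
  proof -
    have "(\<lambda>g::'n\<Rightarrow>nat. norm (\<Prod>i\<in>UNIV. f i (g i))) summable_on UNIV"
      using abs_summable_prod_multi[of f] assms(1) by simp
    thus ?thesis by (rule abs_summable_summable)
  qed
  have "infsum (\<lambda>g::'n\<Rightarrow>nat. \<Prod>i\<in>UNIV. f i (g i)) (PiE UNIV (\<lambda>_. UNIV)) = (\<Prod>i\<in>UNIV. infsum (f i) UNIV)"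
  proof (rule infsum_prod_PiE_abs)
    fix i :: 'n
    show "(\<lambda>x. norm (f i x)) summable_on UNIV" using assms(1)[of i] by simp
  qed simp
  moreover have "infsum (f i) UNIV = s i" for i using assms(2)[of i] infsumI by blast
  ultimately have "infsum (\<lambda>g::'n\<Rightarrow>nat. \<Prod>i\<in>UNIV. f i (g i)) UNIV = (\<Prod>i\<in>UNIV. s i)"
    by simp
  thus ?thesis using has_sum_infsum[OF sm] by simp
qed

lemma has_sum_sum_fin:
  fixes f :: "'b \<Rightarrow> 'a \<Rightarrow> real"
  assumes "finite J" "\<And>j. j \<in> J \<Longrightarrow> (f j has_sum s j) A"
  shows "((\<lambda>x. \<Sum>j\<in>J. f j x) has_sum (\<Sum>j\<in>J. s j)) A"
  using assms
proof (induction J rule: finite_induct)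
  case empty thus ?case by simp
next
  case (insert x F)
  have "((\<lambda>y. f x y + (\<Sum>j\<in>F. f j y)) has_sum (s x + (\<Sum>j\<in>F. s j))) A"
    by (rule has_sum_add) (rule insert.prems, simp, rule insert.IH, rule insert.prems, simp)
  thus ?case using insert by simp
qed

lemma exp_has_sum: "((\<lambda>k. x^k / fact k) has_sum exp x) (UNIV::nat set)" for x :: real
proof -
  have e: "(\<lambda>n. x ^ n /\<^sub>R fact n) = (\<lambda>k. x^k / fact k)" by (simp add: divide_inverse mult.commute)
  have "(\<lambda>k. x^k / fact k) sums exp x" using exp_converges[of x] unfolding e .
  moreover have "summable (\<lambda>k. norm (x^k / fact k))"
  proof -
    have "summable (\<lambda>n. \<bar>x\<bar>^n / fact n)"
      using summable_exp_generic[of "\<bar>x\<bar>"] by (simp add: divide_inverse mult.commute)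
    moreover have "norm (x^k / fact k) = \<bar>x\<bar>^k / fact k" for k
      by (simp add: power_abs)
    ultimately show ?thesis by presburger
  qed
  ultimately show ?thesis by (intro norm_summable_imp_has_sum)
qed

lemma exp_abs_summable: "(\<lambda>k. \<bar>x^k\<bar> / fact k) summable_on (UNIV::nat set)" for x :: real
proof -
  have "((\<lambda>k. \<bar>x\<bar>^k / fact k) has_sum exp \<bar>x\<bar>) UNIV" by (rule exp_has_sum)
  thus ?thesis by (auto simp: power_abs dest: has_sum_imp_summable)
qed

lemma exp_inner_multi:
  fixes h h' :: "real^'n"
  shows "((\<lambda>g. mmono h g * mmono h' g / mfact g) has_sum exp (h \<bullet> h')) UNIV"
proof -
  have "((\<lambda>g::'n\<Rightarrow>nat. \<Prod>i\<in>UNIV. (h$i * h'$i)^(g i) / fact (g i)) has_sum (\<Prod>i\<in>UNIV. exp (h$i*h'$i))) UNIV"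
    by (rule has_sum_prod_multi) (auto intro: exp_abs_summable exp_has_sum)
  moreover have "(\<Prod>i\<in>UNIV. exp (h$i*h'$i)) = exp (h \<bullet> h')"
    by (simp add: inner_vec_def exp_sum)
  moreover have "(\<Prod>i\<in>UNIV. (h$i * h'$i)^(g i) / fact (g i)) = mmono h g * mmono h' g / mfact g" for g
    by (simp only: mmono_def mfact_def prod_dividef power_mult_distrib prod.distrib times_divide_eq_left)
  ultimately show ?thesis by simp
qed



definition Sp :: "nat \<Rightarrow> (nat \<Rightarrow> real) \<Rightarrow> real" where
  "Sp m f = (\<Sum>j\<le>m. (-1)^j * real (m choose j) * f j)"

lemma Sp_Suc: "Sp (Suc m) f = Sp m f - Sp m (\<lambda>j. f (Suc j))"
proof -
  have "Sp (Suc m) f = f 0 + (\<Sum>i\<le>m. (-1)^(Suc i) * real (Suc m choose Suc i) * f (Suc i))"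
    unfolding Sp_def by (subst sum.atMost_Suc_shift) simp
  also have "\<dots> = f 0 - (\<Sum>i\<le>m. (-1)^i * real (m choose i) * f (Suc i))
                  - (\<Sum>i\<le>m. (-1)^i * real (m choose Suc i) * f (Suc i))"
    by (simp add: algebra_simps sum.distrib sum_subtractf sum_negf)
  also have "(\<Sum>i\<le>m. (-1)^i * real (m choose Suc i) * f (Suc i)) = f 0 - Sp m f"
  proof -
    have "Sp m f = (\<Sum>j\<le>Suc m. (-1)^j * real (m choose j) * f j)"
      unfolding Sp_def by simp
    also have "\<dots> = f 0 + (\<Sum>i\<le>m. (-1)^(Suc i) * real (m choose Suc i) * f (Suc i))"
      by (subst sum.atMost_Suc_shift) simp
    finally show ?thesis by (simp add: sum_negf[symmetric])
  qed
  finally show ?thesis unfolding Sp_def by simp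
qed

lemma Sp_linear: "finite L \<Longrightarrow> Sp m (\<lambda>j. \<Sum>l\<in>L. c l * g l j) = (\<Sum>l\<in>L. c l * Sp m (g l))"
  unfolding Sp_def by (simp add: sum_distrib_left sum.swap[of _ L] mult_ac)

definition Dm :: "nat \<Rightarrow> nat \<Rightarrow> real" where
  "Dm m k = (-1)^m * Sp m (\<lambda>j. real j ^ k)"

lemma Dm_Suc: "Dm (Suc m) k = (\<Sum>l<k. real (k choose l) * Dm m l)"
proof -
  have e: "real (Suc j) ^ k = (\<Sum>l\<le>k. real (k choose l) * real j ^ l)" for j
    using binomial_ring[of "real j" 1 k] by (simp add: mult_ac add.commute)
  have "Sp m (\<lambda>j. real (Suc j) ^ k) = (\<Sum>l\<le>k. real (k choose l) * Sp m (\<lambda>j. real j ^ l))"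
    unfolding e by (rule Sp_linear) simp
  also have "\<dots> = (\<Sum>l<k. real (k choose l) * Sp m (\<lambda>j. real j ^ l)) + Sp m (\<lambda>j. real j ^ k)"
    by (simp add: lessThan_Suc_atMost[symmetric])
  finally have "Sp m (\<lambda>j. real (Suc j) ^ k) - Sp m (\<lambda>j. real j ^ k) = (\<Sum>l<k. real (k choose l) * Sp m (\<lambda>j. real j ^ l))"
    by simp
  thus ?thesis unfolding Dm_def Sp_Suc
    by (simp add: sum_distrib_left algebra_simps sum_negf)
qed

lemma Dm_less: "k < m \<Longrightarrow> Dm m k = 0"
proof (induction m arbitrary: k)
  case 0 thus ?case by simp
next
  case (Suc m)
  show ?case unfolding Dm_Suc using Suc by (intro sum.neutral) auto
qed

lemma Dm_same: "Dm m m = fact m"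
proof (induction m)
  case 0 thus ?case by (simp add: Dm_def Sp_def)
next
  case (Suc m)
  have "Dm (Suc m) (Suc m) = (\<Sum>l<Suc m. real (Suc m choose l) * Dm m l)" by (rule Dm_Suc)
  also have "\<dots> = real (Suc m choose m) * Dm m m"
    by (subst sum.remove[of _ m]) (auto simp: Dm_less intro!: sum.neutral)
  also have "\<dots> = fact (Suc m)" using Suc by simp
  finally show ?case .
qed

lemma Dm_bound: "\<bar>Dm m k\<bar> \<le> 2^m * real m ^ k"
proof -
  have "\<bar>Dm m k\<bar> = \<bar>Sp m (\<lambda>j. real j ^ k)\<bar>" by (simp add: Dm_def abs_mult)
  also have "\<dots> \<le> (\<Sum>j\<le>m. \<bar>(-1)^j * real (m choose j) * real j ^ k\<bar>)"
    unfolding Sp_def by (rule sum_abs)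
  also have "\<dots> \<le> (\<Sum>j\<le>m. real (m choose j) * real m ^ k)"
    by (intro sum_mono) (auto simp: abs_mult intro!: mult_left_mono power_mono)
  also have "\<dots> = 2^m * real m ^ k"
    by (simp add: sum_distrib_right[symmetric] choose_row_sum flip: of_nat_sum)
  finally show ?thesis .
qed



definition Bx :: "('n::finite \<Rightarrow> nat) \<Rightarrow> ('n \<Rightarrow> nat) set" where
  "Bx a = PiE UNIV (\<lambda>i. {..a i})"

definition Wt :: "('n::finite \<Rightarrow> nat) \<Rightarrow> real \<Rightarrow> ('n \<Rightarrow> nat) \<Rightarrow> real" where
  "Wt a t b = (\<Prod>i\<in>UNIV. (-1)^(a i) * (-1)^(b i) * real (a i choose b i) / t^(a i))"

definition pt :: "real \<Rightarrow> ('n \<Rightarrow> nat) \<Rightarrow> real^'n" where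
  "pt t b = (\<chi> i. t * real (b i))"

definition EE :: "(real^'n \<Rightarrow> real) \<Rightarrow> ('n \<Rightarrow> nat) \<Rightarrow> real \<Rightarrow> real" where
  "EE G a t = (\<Sum>b\<in>Bx a. Wt a t b * G (pt t b))"

definition dmom :: "real \<Rightarrow> ('n::finite \<Rightarrow> nat) \<Rightarrow> ('n \<Rightarrow> nat) \<Rightarrow> real" where
  "dmom t a g = (\<Prod>i\<in>UNIV. t^(g i) / t^(a i) * Dm (a i) (g i))"

lemma finite_Bx[simp]: "finite (Bx a)"
  unfolding Bx_def by (rule finite_PiE) auto

lemma moment: "(\<Sum>b\<in>Bx a. Wt a t b * mmono (pt t b) g) = dmom t a g"
proof -
  have "(\<Sum>b\<in>Bx a. Wt a t b * mmono (pt t b) g)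
      = (\<Sum>b\<in>Bx a. \<Prod>i\<in>UNIV. (-1)^(a i) * (-1)^(b i) * real (a i choose b i) / t^(a i) * (t * real (b i))^(g i))"
    by (simp add: Wt_def mmono_def pt_def flip: prod.distrib)
  also have "\<dots> = (\<Prod>i\<in>UNIV. \<Sum>k\<in>{..a i}. (-1)^(a i) * (-1)^k * real (a i choose k) / t^(a i) * (t * real k)^(g i))"
    unfolding Bx_def by (rule prod_sum_PiE[symmetric]) auto
  also have "\<dots> = dmom t a g"
    unfolding dmom_def Dm_def Sp_def
    by (intro prod.cong refl) (simp add: sum_distrib_left power_mult_distrib mult_ac)
  finally show ?thesis .
qed

definition lamc :: "real \<Rightarrow> ('x \<Rightarrow> real) \<Rightarrow> ((('n::finite \<Rightarrow> nat) \<times> real) \<times> ('n \<Rightarrow> nat)) option \<Rightarrow> real" where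
  "lamc a0 bb j = (case j of None \<Rightarrow> a0 | Some (x, b) \<Rightarrow> 0)"

lemma comb_sum:
  fixes phi :: "real^'n::finite \<Rightarrow> real" and S :: "(('n \<Rightarrow> nat) \<times> real) set"
  assumes "finite S"
  shows "(\<Sum>j\<in>insert None (Some ` Sigma S (\<lambda>x. Bx (fst x))).
            (case j of None \<Rightarrow> a0 | Some (x, b) \<Rightarrow> bb x * Wt (fst x) (snd x) b) *
            phi (case j of None \<Rightarrow> h | Some (x, b) \<Rightarrow> pt (snd x) b))
       = a0 * phi h + (\<Sum>x\<in>S. bb x * (\<Sum>b\<in>Bx (fst x). Wt (fst x) (snd x) b * phi (pt (snd x) b)))"
proof -
  have fin: "finite (Sigma S (\<lambda>x. Bx (fst x)))" using assms by auto
  have "(\<Sum>j\<in>insert None (Some ` Sigma S (\<lambda>x. Bx (fst x))).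
            (case j of None \<Rightarrow> a0 | Some (x, b) \<Rightarrow> bb x * Wt (fst x) (snd x) b) *
            phi (case j of None \<Rightarrow> h | Some (x, b) \<Rightarrow> pt (snd x) b))
     = a0 * phi h + (\<Sum>xb\<in>Sigma S (\<lambda>x. Bx (fst x)). bb (fst xb) * Wt (fst (fst xb)) (snd (fst xb)) (snd xb) * phi (pt (snd (fst xb)) (snd xb)))"
    using fin by (simp add: sum.reindex case_prod_unfold)
  also have "(\<Sum>xb\<in>Sigma S (\<lambda>x. Bx (fst x)). bb (fst xb) * Wt (fst (fst xb)) (snd (fst xb)) (snd xb) * phi (pt (snd (fst xb)) (snd xb)))
     = (\<Sum>x\<in>S. \<Sum>b\<in>Bx (fst x). bb x * Wt (fst x) (snd x) b * phi (pt (snd x) b))"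
    using assms by (subst sum.Sigma) (auto simp: case_prod_unfold)
  finally show ?thesis by (simp add: sum_distrib_left mult_ac)
qed

lemma gram_series:
  fixes p :: "'j \<Rightarrow> real^'n::finite"
  assumes "finite J"
  shows "((\<lambda>g. (\<Sum>j\<in>J. lam j * mmono (p j) g)^2 / mfact g) has_sum
            (\<Sum>j\<in>J. \<Sum>l\<in>J. lam j * lam l * exp (p j \<bullet> p l))) UNIV"
proof -
  have eq: "(\<Sum>j\<in>J. lam j * mmono (p j) g)^2 / mfact g =
            (\<Sum>j\<in>J. \<Sum>l\<in>J. lam j * lam l * (mmono (p j) g * mmono (p l) g / mfact g))" for g
    by (simp add: power2_eq_square sum_product sum_divide_distrib mult_ac)
  have "((\<lambda>g. \<Sum>j\<in>J. \<Sum>l\<in>J. lam j * lam l * (mmono (p j) g * mmono (p l) g / mfact g)) has_sum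
            (\<Sum>j\<in>J. \<Sum>l\<in>J. lam j * lam l * exp (p j \<bullet> p l))) UNIV"
  proof (intro has_sum_sum_fin assms)
    fix j l
    show "((\<lambda>g. lam j * lam l * (mmono (p j) g * mmono (p l) g / mfact g)) has_sum lam j * lam l * exp (p j \<bullet> p l)) UNIV"
      by (intro has_sum_cmult_right exp_inner_multi)
  qed
  thus ?thesis unfolding eq .
qed



lemma CL:
  fixes G :: "real^'n::finite \<Rightarrow> real" and S :: "(('n\<Rightarrow>nat)\<times>real) set"
    and bb :: "('n\<Rightarrow>nat)\<times>real \<Rightarrow> real"
  assumes cond: "\<And>(J :: ((('n\<Rightarrow>nat)\<times>real)\<times>('n\<Rightarrow>nat)) option set) lam p. finite J \<Longrightarrow>
      (\<Sum>j\<in>J. lam j * G (p j))^2 \<le> M * (\<Sum>j\<in>J. \<Sum>l\<in>J. lam j * lam l * exp (p j \<bullet> p l))"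
    and fin: "finite S"
  shows "\<exists>Q. ((\<lambda>g. (a0 * mmono h g + (\<Sum>x\<in>S. bb x * dmom (snd x) (fst x) g))^2 / mfact g) has_sum Q) UNIV
            \<and> (a0 * G h + (\<Sum>x\<in>S. bb x * EE G (fst x) (snd x)))^2 \<le> M * Q"
proof -
  define J where "J = insert None (Some ` Sigma S (\<lambda>x. Bx (fst x)))"
  define lam :: "((('n\<Rightarrow>nat)\<times>real)\<times>('n\<Rightarrow>nat)) option \<Rightarrow> real" where "lam j = (case j of None \<Rightarrow> a0 | Some (x, b) \<Rightarrow> bb x * Wt (fst x) (snd x) b)" for j
  define p :: "((('n\<Rightarrow>nat)\<times>real)\<times>('n\<Rightarrow>nat)) option \<Rightarrow> real^'n" where "p j = (case j of None \<Rightarrow> h | Some (x, b) \<Rightarrow> pt (snd x) b)" for j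
  have finJ: "finite J" unfolding J_def using fin by auto
  define Q where "Q = (\<Sum>j\<in>J. \<Sum>l\<in>J. lam j * lam l * exp (p j \<bullet> p l))"
  have e1: "(\<Sum>j\<in>J. lam j * mmono (p j) g) = a0 * mmono h g + (\<Sum>x\<in>S. bb x * dmom (snd x) (fst x) g)" for g
    unfolding J_def lam_def p_def comb_sum[OF fin, of a0 bb "\<lambda>v. mmono v g" h] moment ..
  have e2: "(\<Sum>j\<in>J. lam j * G (p j)) = a0 * G h + (\<Sum>x\<in>S. bb x * EE G (fst x) (snd x))"
    unfolding J_def lam_def p_def comb_sum[OF fin, of a0 bb G h] EE_def ..
  have "((\<lambda>g. (\<Sum>j\<in>J. lam j * mmono (p j) g)^2 / mfact g) has_sum Q) UNIV"
    unfolding Q_def by (rule gram_series[OF finJ])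
  moreover have "(\<Sum>j\<in>J. lam j * G (p j))^2 \<le> M * Q"
    unfolding Q_def by (rule cond[OF finJ])
  ultimately show ?thesis unfolding e1 e2 by blast
qed

definition cb :: "('n::finite \<Rightarrow> nat) \<Rightarrow> ('n \<Rightarrow> nat) \<Rightarrow> real" where
  "cb a g = (\<Prod>i\<in>UNIV. 4^(a i) * real (a i)^(2 * g i) / fact (g i))"

definition Cb :: "('n::finite \<Rightarrow> nat) \<Rightarrow> real" where
  "Cb a = (\<Prod>i\<in>UNIV. 4^(a i) * exp (real (a i)^2))"

lemma cb_nonneg: "cb a g \<ge> 0"
  unfolding cb_def by (intro prod_nonneg) auto

lemma cb_has_sum: "(cb a has_sum Cb a) UNIV"
proof -
  have "((\<lambda>g::'a\<Rightarrow>nat. \<Prod>i\<in>UNIV. 4^(a i) * ((real (a i)^2)^(g i) / fact (g i))) has_sum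
          (\<Prod>i\<in>UNIV. 4^(a i) * exp (real (a i)^2))) UNIV"
  proof (rule has_sum_prod_multi)
    fix i
    show "(\<lambda>k. norm (4^(a i) * ((real (a i)^2)^k / fact k))) summable_on UNIV"
      using summable_on_cmult_right[OF exp_abs_summable[of "real (a i)^2"], of "4^(a i)"]
      by (simp add: abs_mult)
    show "((\<lambda>k. 4^(a i) * ((real (a i)^2)^k / fact k)) has_sum 4^(a i) * exp (real (a i)^2)) UNIV"
      by (intro has_sum_cmult_right exp_has_sum)
  qed
  thus ?thesis unfolding cb_def Cb_def by (simp add: power_mult)
qed

lemma dmom_same: "t \<noteq> 0 \<Longrightarrow> dmom t a a = mfact a"
  unfolding dmom_def mfact_def by (simp add: Dm_same)

lemma dmom_less: "g i < a i \<Longrightarrow> dmom t a g = 0"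
  unfolding dmom_def
  apply (rule prod_zero)
   apply simp
  apply (rule bexI[of _ i])
   apply (simp add: Dm_less)
  apply simp
  done

lemma err_bound:
  fixes t :: real
  assumes t: "0 < t" "t \<le> 1"
  shows "((if g = a then mfact a else 0) - dmom t a g)^2 / mfact g \<le> t^2 * cb a g"
proof (cases "g = a")
  case True thus ?thesis using t dmom_same[of t a] by (simp add: cb_nonneg)
next
  case ne: False
  show ?thesis
  proof (cases "\<exists>i. g i < a i")
    case True
    then obtain i where "g i < a i" by blast
    hence "dmom t a g = 0" by (rule dmom_less)
    thus ?thesis using ne t by (simp add: cb_nonneg)
  next
    case False
    hence le: "a i \<le> g i" for i by (simp add: not_less)
    from ne obtain i0 where i0: "g i0 \<noteq> a i0" by auto
    have sumd: "(\<Sum>i\<in>UNIV. g i - a i) \<ge> 1"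
    proof -
      have "g i0 - a i0 \<ge> 1" using i0 le[of i0] by linarith
      also have "g i0 - a i0 \<le> (\<Sum>i\<in>UNIV. g i - a i)"
        by (rule member_le_sum) auto
      finally show ?thesis .
    qed
    have "\<bar>dmom t a g\<bar> = (\<Prod>i\<in>UNIV. t^(g i - a i) * \<bar>Dm (a i) (g i)\<bar>)"
      unfolding dmom_def abs_prod
    proof (intro prod.cong refl)
      fix i
      have "t^(g i) / t^(a i) = t^(g i - a i)" using t le[of i] by (simp add: power_diff)
      thus "\<bar>t ^ g i / t ^ a i * Dm (a i) (g i)\<bar> = t ^ (g i - a i) * \<bar>Dm (a i) (g i)\<bar>"
        using t by (simp add: abs_mult)
    qed
    also have "\<dots> = t^(\<Sum>i\<in>UNIV. g i - a i) * (\<Prod>i\<in>UNIV. \<bar>Dm (a i) (g i)\<bar>)"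
      by (simp add: prod.distrib power_sum)
    also have "\<dots> \<le> t * (\<Prod>i\<in>UNIV. 2^(a i) * real (a i)^(g i))"
    proof (rule mult_mono)
      show "t^(\<Sum>i\<in>UNIV. g i - a i) \<le> t" using power_decreasing[OF sumd, of t] t by simp
      show "(\<Prod>i\<in>UNIV. \<bar>Dm (a i) (g i)\<bar>) \<le> (\<Prod>i\<in>UNIV. 2^(a i) * real (a i)^(g i))"
        by (intro prod_mono conjI Dm_bound) auto
    qed (use t in \<open>auto intro: prod_nonneg\<close>)
    finally have b: "\<bar>dmom t a g\<bar> \<le> t * (\<Prod>i\<in>UNIV. 2^(a i) * real (a i)^(g i))" .
    have "(dmom t a g)^2 \<le> (t * (\<Prod>i\<in>UNIV. 2^(a i) * real (a i)^(g i)))^2"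
      using b by (metis abs_ge_zero power2_abs power_mono)
    also have "\<dots> = t^2 * (\<Prod>i\<in>UNIV. 4^(a i) * real (a i)^(2 * g i))"
    proof -
      have "(\<Prod>i\<in>UNIV. 2^(a i) * real (a i)^(g i))^2 = (\<Prod>i\<in>UNIV. (2^(a i) * real (a i)^(g i))^2)"
        by (rule prod_power_distrib)
      also have "\<dots> = (\<Prod>i\<in>UNIV. 4^(a i) * real (a i)^(2 * g i))"
      proof (intro prod.cong refl)
        fix i
        have "(2::real)^(a i) * 2^(a i) = 4^(a i)" by (simp flip: power_mult_distrib)
        moreover have "real (a i)^(2 * g i) = real (a i)^(g i) * real (a i)^(g i)"
          by (simp add: mult_2 power_add)
        ultimately show "(2^(a i) * real (a i)^(g i))^2 = 4^(a i) * real (a i)^(2 * g i)"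
          by (simp only: power2_eq_square) (simp add: ac_simps)
      qed
      finally show ?thesis by (simp add: power_mult_distrib)
    qed
    finally have "(dmom t a g)^2 / mfact g \<le> t^2 * (\<Prod>i\<in>UNIV. 4^(a i) * real (a i)^(2 * g i)) / mfact g"
      using mfact_pos[of g] by (simp add: divide_right_mono)
    also have "\<dots> = t^2 * cb a g"
      unfolding cb_def mfact_def by (simp add: prod_dividef)
    finally show ?thesis using ne by simp
  qed
qed



lemma Cb_nonneg: "Cb a \<ge> 0"
  unfolding Cb_def by (intro prod_nonneg) auto

definition errf :: "real \<Rightarrow> ('n::finite \<Rightarrow> nat) \<Rightarrow> ('n \<Rightarrow> nat) \<Rightarrow> real" where
  "errf t a g = (if g = a then mfact a else 0) - dmom t a g"

lemma has_sum_diff':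
  fixes f g :: "'a \<Rightarrow> real"
  assumes "(f has_sum a) A" "(g has_sum b) A"
  shows "((\<lambda>x. f x - g x) has_sum (a - b)) A"
proof -
  have "((\<lambda>x. - g x) has_sum (- b)) A" using assms(2) has_sum_uminus[where f=g and a="-b" and A=A] by simp
  from has_sum_add[OF assms(1) this] show ?thesis by simp
qed

context
  fixes G :: "real^'n::finite \<Rightarrow> real" and M :: real
  assumes M: "M \<ge> 0"
  assumes cond: "\<And>(J :: ((('n\<Rightarrow>nat)\<times>real)\<times>('n\<Rightarrow>nat)) option set) lam p. finite J \<Longrightarrow>
      (\<Sum>j\<in>J. lam j * G (p j))^2 \<le> M * (\<Sum>j\<in>J. \<Sum>l\<in>J. lam j * lam l * exp (p j \<bullet> p l))"
begin

lemma cauchy_bound: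
  assumes t: "0 < t" "t \<le> 1" and s: "0 < s" "s \<le> 1"
  shows "(EE G a t - EE G a s)^2 \<le> 2 * M * (t^2 + s^2) * Cb a"
proof (cases "t = s")
  case True thus ?thesis using M Cb_nonneg[of a] by simp
next
  case ne: False
  define S where "S = {(a, t), (a, s)}"
  define bb :: "('n\<Rightarrow>nat)\<times>real \<Rightarrow> real" where "bb x = (if snd x = t then 1 else -1)" for x
  have finS: "finite S" unfolding S_def by simp
  have "\<exists>Q. ((\<lambda>g. (0 * mmono 0 g + (\<Sum>x\<in>S. bb x * dmom (snd x) (fst x) g))^2 / mfact g) has_sum Q) UNIV
            \<and> (0 * G 0 + (\<Sum>x\<in>S. bb x * EE G (fst x) (snd x)))^2 \<le> M * Q"
    apply (rule CL)
     apply (erule cond)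
    apply (rule finS)
    done
  then obtain Q where
    Q: "((\<lambda>g. (0 * mmono 0 g + (\<Sum>x\<in>S. bb x * dmom (snd x) (fst x) g))^2 / mfact g) has_sum Q) UNIV"
    and le: "(0 * G 0 + (\<Sum>x\<in>S. bb x * EE G (fst x) (snd x)))^2 \<le> M * Q"
    by blast
  have sS: "(\<Sum>x\<in>S. bb x * dmom (snd x) (fst x) g) = dmom t a g - dmom s a g" for g
    unfolding S_def bb_def using ne by simp
  have sS2: "(\<Sum>x\<in>S. bb x * EE G (fst x) (snd x)) = EE G a t - EE G a s"
    unfolding S_def bb_def using ne by simp
  have eqf: "(0 * mmono 0 g + (\<Sum>x\<in>S. bb x * dmom (snd x) (fst x) g))^2 / mfact g
     = (errf s a g - errf t a g)^2 / mfact g" for g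
    unfolding sS errf_def by (simp only: mult_zero_left add_0_left) (rule arg_cong[where f="\<lambda>x. x^2 / mfact g"], simp)
  have Q': "((\<lambda>g. (errf s a g - errf t a g)^2 / mfact g) has_sum Q) UNIV"
    using Q unfolding eqf .
  have R: "((\<lambda>g. 2 * (s^2 * cb a g) + 2 * (t^2 * cb a g)) has_sum (2 * (s^2 * Cb a) + 2 * (t^2 * Cb a))) UNIV"
    by (intro has_sum_add has_sum_cmult_right cb_has_sum)
  have "Q \<le> 2 * (s^2 * Cb a) + 2 * (t^2 * Cb a)"
  proof (rule has_sum_mono[OF Q' R])
    fix g :: "'n \<Rightarrow> nat"
    have "(errf s a g - errf t a g)^2 \<le> 2 * (errf s a g)^2 + 2 * (errf t a g)^2"
      by (smt (verit) zero_le_power2 power2_diff power2_sum)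
    hence "(errf s a g - errf t a g)^2 / mfact g \<le> (2 * (errf s a g)^2 + 2 * (errf t a g)^2) / mfact g"
      using mfact_pos[of g] by (intro divide_right_mono) auto
    hence "(errf s a g - errf t a g)^2 / mfact g \<le> 2 * ((errf s a g)^2 / mfact g) + 2 * ((errf t a g)^2 / mfact g)"
      by (simp add: add_divide_distrib)
    also have "\<dots> \<le> 2 * (s^2 * cb a g) + 2 * (t^2 * cb a g)"
      using err_bound[OF s, of g a] err_bound[OF t, of g a] unfolding errf_def by simp
    finally show "(errf s a g - errf t a g)^2 / mfact g \<le> 2 * (s^2 * cb a g) + 2 * (t^2 * cb a g)" .
  qed
  moreover have "(EE G a t - EE G a s)^2 \<le> M * Q"
    using le unfolding sS2 by simp
  ultimately have "(EE G a t - EE G a s)^2 \<le> M * (2 * (s^2 * Cb a) + 2 * (t^2 * Cb a))"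
    using M by (meson mult_left_mono order_trans)
  thus ?thesis by (simp add: algebra_simps)
qed

definition tk :: "nat \<Rightarrow> real" where "tk k = inverse (real (Suc k))"

lemma tk_pos: "0 < tk k"
  unfolding tk_def by auto

lemma tk_le1: "tk k \<le> 1"
  unfolding tk_def by (simp add: inverse_eq_divide)

lemma tk_lim: "tk \<longlonglongrightarrow> 0"
  unfolding tk_def by (rule LIMSEQ_inverse_real_of_nat)

lemma tk_mono: "m \<ge> n \<Longrightarrow> tk m \<le> tk n"
  unfolding tk_def by (simp add: le_imp_inverse_le)

lemma EE_convergent: "convergent (\<lambda>k. EE G a (tk k))"
proof (rule real_Cauchy_convergent, rule CauchyI)
  fix e :: real assume e: "0 < e"
  define K where "K = 4 * M * Cb a"
  have K: "K \<ge> 0" unfolding K_def using M Cb_nonneg[of a] by simp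
  have "(\<lambda>k. sqrt K * tk k) \<longlonglongrightarrow> sqrt K * 0"
    by (intro tendsto_intros tk_lim)
  then obtain N where N: "\<And>k. k \<ge> N \<Longrightarrow> norm (sqrt K * tk k - 0) < e"
    using e unfolding LIMSEQ_def dist_norm by auto
  show "\<exists>N. \<forall>m\<ge>N. \<forall>n\<ge>N. norm (EE G a (tk m) - EE G a (tk n)) < e"
  proof (intro exI allI impI)
    fix m n assume mn: "N \<le> m" "N \<le> n"
    have "(EE G a (tk m) - EE G a (tk n))^2 \<le> 2 * M * ((tk m)^2 + (tk n)^2) * Cb a"
      by (rule cauchy_bound) (auto intro: tk_pos tk_le1)
    also have "\<dots> \<le> 2 * M * ((tk N)^2 + (tk N)^2) * Cb a"
      using M Cb_nonneg[of a] tk_mono[OF mn(1)] tk_mono[OF mn(2)] tk_pos[of m] tk_pos[of n]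
      by (intro mult_right_mono mult_left_mono add_mono power_mono) auto
    also have "\<dots> = (sqrt K * tk N)^2" using K unfolding K_def by (simp add: power_mult_distrib)
    finally have "\<bar>EE G a (tk m) - EE G a (tk n)\<bar> \<le> \<bar>sqrt K * tk N\<bar>"
      using abs_le_square_iff by blast
    also have "\<dots> < e" using N[of N] by simp
    finally show "norm (EE G a (tk m) - EE G a (tk n)) < e" by simp
  qed
qed

definition LL :: "('n \<Rightarrow> nat) \<Rightarrow> real" where "LL a = lim (\<lambda>k. EE G a (tk k))"

lemma EE_lim: "(\<lambda>k. EE G a (tk k)) \<longlonglongrightarrow> LL a"
  unfolding LL_def using EE_convergent convergent_LIMSEQ_iff by blast

lemma main_bound:
  assumes t: "0 < t" "t \<le> 1" and S0: "finite S0"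
  shows "(G h - (\<Sum>a\<in>S0. mmono h a / mfact a * EE G a t))^2
     \<le> M * (2 * (exp (h \<bullet> h) - (\<Sum>g\<in>S0. mmono h g * mmono h g / mfact g))
             + 2 * real (card S0) * (\<Sum>a\<in>S0. (mmono h a / mfact a)^2 * (t^2 * Cb a)))"
proof -
  define b where "b a = mmono h a / mfact a" for a
  define S where "S = (\<lambda>a. (a, t)) ` S0"
  define bb :: "('n\<Rightarrow>nat)\<times>real \<Rightarrow> real" where "bb x = - b (fst x)" for x
  have finS: "finite S" unfolding S_def using S0 by simp
  have inj: "inj_on (\<lambda>a. (a, t)) S0" by (auto simp: inj_on_def)
  have "\<exists>Q. ((\<lambda>g. (1 * mmono h g + (\<Sum>x\<in>S. bb x * dmom (snd x) (fst x) g))^2 / mfact g) has_sum Q) UNIV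
            \<and> (1 * G h + (\<Sum>x\<in>S. bb x * EE G (fst x) (snd x)))^2 \<le> M * Q"
    apply (rule CL)
     apply (erule cond)
    apply (rule finS)
    done
  then obtain Q where
    Q: "((\<lambda>g. (1 * mmono h g + (\<Sum>x\<in>S. bb x * dmom (snd x) (fst x) g))^2 / mfact g) has_sum Q) UNIV"
    and le: "(1 * G h + (\<Sum>x\<in>S. bb x * EE G (fst x) (snd x)))^2 \<le> M * Q"
    by blast
  have r1: "(\<Sum>x\<in>S. bb x * dmom (snd x) (fst x) g) = - (\<Sum>a\<in>S0. b a * dmom t a g)" for g
    unfolding S_def bb_def by (simp add: sum.reindex[OF inj] sum_negf)
  have r2: "(\<Sum>x\<in>S. bb x * EE G (fst x) (snd x)) = - (\<Sum>a\<in>S0. b a * EE G a t)"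
    unfolding S_def bb_def by (simp add: sum.reindex[OF inj] sum_negf)
  define A where "A g = (if g \<in> S0 then 0 else mmono h g)" for g
  define V where "V g = mmono h g - (\<Sum>a\<in>S0. b a * dmom t a g)" for g
  have Q': "((\<lambda>g. (V g)^2 / mfact g) has_sum Q) UNIV"
    using Q unfolding r1 V_def by simp
  have VA: "V g = A g + (\<Sum>a\<in>S0. b a * errf t a g)" for g
  proof -
    have "(\<Sum>a\<in>S0. b a * (if g = a then mfact a else 0)) = (if g \<in> S0 then b g * mfact g else 0)"
      using S0 by (simp add: if_distrib[of "\<lambda>x. b _ * x"] sum.delta cong: if_cong)
    also have "\<dots> = (if g \<in> S0 then mmono h g else 0)"
      unfolding b_def using mfact_pos[of g] by simp
    finally have "(\<Sum>a\<in>S0. b a * errf t a g) = (if g \<in> S0 then mmono h g else 0) - (\<Sum>a\<in>S0. b a * dmom t a g)"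
      unfolding errf_def by (simp add: right_diff_distrib sum_subtractf)
    thus ?thesis unfolding V_def A_def by simp
  qed
  define T where "T = exp (h \<bullet> h) - (\<Sum>g\<in>S0. mmono h g * mmono h g / mfact g)"
  have HA: "((\<lambda>g. (A g)^2 / mfact g) has_sum T) UNIV"
  proof -
    have h1: "((\<lambda>g. mmono h g * mmono h g / mfact g) has_sum exp (h \<bullet> h)) UNIV"
      by (rule exp_inner_multi)
    have "((\<lambda>g. mmono h g * mmono h g / mfact g) has_sum (\<Sum>g\<in>S0. mmono h g * mmono h g / mfact g)) S0"
      using S0 by (rule has_sum_finite)
    hence h2: "((\<lambda>g. if g \<in> S0 then mmono h g * mmono h g / mfact g else 0) has_sum (\<Sum>g\<in>S0. mmono h g * mmono h g / mfact g)) UNIV"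
      by (subst has_sum_cong_neutral[where T=S0]) auto
    have "((\<lambda>g. mmono h g * mmono h g / mfact g - (if g \<in> S0 then mmono h g * mmono h g / mfact g else 0)) has_sum T) UNIV"
      unfolding T_def by (rule has_sum_diff'[OF h1 h2])
    moreover have "mmono h g * mmono h g / mfact g - (if g \<in> S0 then mmono h g * mmono h g / mfact g else 0) = (A g)^2 / mfact g" for g
      unfolding A_def by (simp add: power2_eq_square)
    ultimately show ?thesis by simp
  qed
  define Rv where "Rv = 2 * T + 2 * real (card S0) * (\<Sum>a\<in>S0. (b a)^2 * (t^2 * Cb a))"
  have HR: "((\<lambda>g. 2 * ((A g)^2 / mfact g) + 2 * real (card S0) * (\<Sum>a\<in>S0. (b a)^2 * (t^2 * cb a g))) has_sum Rv) UNIV"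
    unfolding Rv_def
    by (intro has_sum_add has_sum_cmult_right HA has_sum_sum_fin S0 cb_has_sum)
  have "Q \<le> Rv"
  proof (rule has_sum_mono[OF Q' HR])
    fix g :: "'n \<Rightarrow> nat"
    have mp: "mfact g > 0" by (rule mfact_pos)
    have "(V g)^2 \<le> 2 * (A g)^2 + 2 * (\<Sum>a\<in>S0. b a * errf t a g)^2"
      unfolding VA by (smt (verit) zero_le_power2 power2_diff power2_sum)
    also have "(\<Sum>a\<in>S0. b a * errf t a g)^2 \<le> (\<Sum>a\<in>S0. (b a * errf t a g)^2) * real (card S0)"
      by (rule sum_squared_le_sum_of_squares)
    finally have v1: "(V g)^2 \<le> 2 * (A g)^2 + 2 * ((\<Sum>a\<in>S0. (b a * errf t a g)^2) * real (card S0))"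
      by simp
    have v2: "(b a * errf t a g)^2 / mfact g \<le> (b a)^2 * (t^2 * cb a g)" for a
    proof -
      have "(b a * errf t a g)^2 / mfact g = (b a)^2 * ((errf t a g)^2 / mfact g)"
        by (simp add: power_mult_distrib)
      also have "\<dots> \<le> (b a)^2 * (t^2 * cb a g)"
        using err_bound[OF t, of g a] unfolding errf_def by (intro mult_left_mono) auto
      finally show ?thesis .
    qed
    have "(V g)^2 / mfact g \<le> (2 * (A g)^2 + 2 * ((\<Sum>a\<in>S0. (b a * errf t a g)^2) * real (card S0))) / mfact g"
      using v1 mp by (intro divide_right_mono) auto
    also have "\<dots> = 2 * ((A g)^2 / mfact g) + 2 * real (card S0) * (\<Sum>a\<in>S0. (b a * errf t a g)^2 / mfact g)"
      by (simp add: add_divide_distrib sum_divide_distrib[symmetric] field_simps)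
    also have "\<dots> \<le> 2 * ((A g)^2 / mfact g) + 2 * real (card S0) * (\<Sum>a\<in>S0. (b a)^2 * (t^2 * cb a g))"
      using v2 by (intro add_left_mono mult_left_mono sum_mono) auto
    finally show "(V g)^2 / mfact g \<le> 2 * ((A g)^2 / mfact g) + 2 * real (card S0) * (\<Sum>a\<in>S0. (b a)^2 * (t^2 * cb a g))" .
  qed
  moreover have "(G h - (\<Sum>a\<in>S0. b a * EE G a t))^2 \<le> M * Q"
    using le unfolding r2 by simp
  ultimately have "(G h - (\<Sum>a\<in>S0. b a * EE G a t))^2 \<le> M * Rv"
    using M by (meson mult_left_mono order_trans)
  thus ?thesis unfolding Rv_def T_def b_def .
qed

lemma limit_bound:
  assumes S0: "finite S0"
  shows "(G h - (\<Sum>a\<in>S0. mmono h a / mfact a * LL a))^2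
     \<le> M * (2 * (exp (h \<bullet> h) - (\<Sum>g\<in>S0. mmono h g * mmono h g / mfact g)))"
proof (rule LIMSEQ_le)
  show "(\<lambda>k. (G h - (\<Sum>a\<in>S0. mmono h a / mfact a * EE G a (tk k)))^2) \<longlonglongrightarrow>
          (G h - (\<Sum>a\<in>S0. mmono h a / mfact a * LL a))^2"
    by (intro tendsto_intros EE_lim)
  have "(\<lambda>k. M * (2 * (exp (h \<bullet> h) - (\<Sum>g\<in>S0. mmono h g * mmono h g / mfact g))
             + 2 * real (card S0) * (\<Sum>a\<in>S0. (mmono h a / mfact a)^2 * ((tk k)^2 * Cb a))))
       \<longlonglongrightarrow> M * (2 * (exp (h \<bullet> h) - (\<Sum>g\<in>S0. mmono h g * mmono h g / mfact g))
             + 2 * real (card S0) * (\<Sum>a\<in>S0. (mmono h a / mfact a)^2 * (0^2 * Cb a)))"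
    by (intro tendsto_intros tk_lim)
  thus "(\<lambda>k. M * (2 * (exp (h \<bullet> h) - (\<Sum>g\<in>S0. mmono h g * mmono h g / mfact g))
             + 2 * real (card S0) * (\<Sum>a\<in>S0. (mmono h a / mfact a)^2 * ((tk k)^2 * Cb a))))
       \<longlonglongrightarrow> M * (2 * (exp (h \<bullet> h) - (\<Sum>g\<in>S0. mmono h g * mmono h g / mfact g)))"
    by simp
  show "\<exists>N. \<forall>k\<ge>N. (G h - (\<Sum>a\<in>S0. mmono h a / mfact a * EE G a (tk k)))^2
     \<le> M * (2 * (exp (h \<bullet> h) - (\<Sum>g\<in>S0. mmono h g * mmono h g / mfact g))
             + 2 * real (card S0) * (\<Sum>a\<in>S0. (mmono h a / mfact a)^2 * ((tk k)^2 * Cb a)))"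
    using main_bound[OF tk_pos tk_le1 S0] by blast
qed

lemma P_result: "((\<lambda>a. LL a / mfact a * mmono h a) has_sum G h) UNIV"
  unfolding has_sum_def
proof (rule tendsto_sandwich)
  define q where "q g = mmono h g * mmono h g / mfact g" for g
  define u where "u S0 = sqrt (M * (2 * (exp (h \<bullet> h) - sum q S0)))" for S0
  have sq: "(sum q \<longlongrightarrow> exp (h \<bullet> h)) (finite_subsets_at_top UNIV)"
    using exp_inner_multi[of h h] unfolding has_sum_def q_def .
  have "(u \<longlongrightarrow> sqrt (M * (2 * (exp (h \<bullet> h) - exp (h \<bullet> h))))) (finite_subsets_at_top UNIV)"
    unfolding u_def by (intro tendsto_intros sq)
  hence u0: "(u \<longlongrightarrow> 0) (finite_subsets_at_top UNIV)" by simp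
  have bnd: "\<bar>G h - sum (\<lambda>a. LL a / mfact a * mmono h a) S0\<bar> \<le> u S0" if "finite S0" for S0
  proof -
    have e: "sum (\<lambda>a. LL a / mfact a * mmono h a) S0 = (\<Sum>a\<in>S0. mmono h a / mfact a * LL a)"
      by (simp add: mult_ac)
    have "\<bar>G h - sum (\<lambda>a. LL a / mfact a * mmono h a) S0\<bar> = sqrt ((G h - (\<Sum>a\<in>S0. mmono h a / mfact a * LL a))^2)"
      unfolding e by simp
    also have "\<dots> \<le> u S0" unfolding u_def q_def
      by (rule real_sqrt_le_mono, rule limit_bound[OF that])
    finally show ?thesis .
  qed
  show "\<forall>\<^sub>F S0 in finite_subsets_at_top UNIV. G h - u S0 \<le> sum (\<lambda>a. LL a / mfact a * mmono h a) S0"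
    by (rule eventually_finite_subsets_at_top_weakI) (use bnd in \<open>fastforce simp: abs_le_iff\<close>)
  show "\<forall>\<^sub>F S0 in finite_subsets_at_top UNIV. sum (\<lambda>a. LL a / mfact a * mmono h a) S0 \<le> G h + u S0"
    by (rule eventually_finite_subsets_at_top_weakI) (use bnd in \<open>fastforce simp: abs_le_iff\<close>)
  show "((\<lambda>S0. G h - u S0) \<longlongrightarrow> G h) (finite_subsets_at_top UNIV)"
    using tendsto_diff[OF tendsto_const u0, of "G h"] by simp
  show "((\<lambda>S0. G h + u S0) \<longlongrightarrow> G h) (finite_subsets_at_top UNIV)"
    using tendsto_add[OF tendsto_const u0, of "G h"] by simp
qed

end

lemma P_main:
  fixes G :: "real^'n::finite \<Rightarrow> real"
  assumes M: "M \<ge> 0"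
  assumes cond: "\<And>(J :: ((('n\<Rightarrow>nat)\<times>real)\<times>('n\<Rightarrow>nat)) option set) lam p. finite J \<Longrightarrow>
      (\<Sum>j\<in>J. lam j * G (p j))^2 \<le> M * (\<Sum>j\<in>J. \<Sum>l\<in>J. lam j * lam l * exp (p j \<bullet> p l))"
  shows "\<exists>c. \<forall>h. ((\<lambda>a. c a * mmono h a) has_sum G h) UNIV"
proof -
  have "((\<lambda>a. LL G a / mfact a * mmono h a) has_sum G h) UNIV" for h
    by (rule P_result[OF M]) (erule cond)
  note * = this
  show ?thesis
    apply (rule exI[where x="\<lambda>a. LL G a / mfact a"])
    apply (intro allI)
    apply (rule *)
    done
qed



definition conv :: "(('n::finite \<Rightarrow> nat) \<Rightarrow> real) \<Rightarrow> (('n \<Rightarrow> nat) \<Rightarrow> real) \<Rightarrow> ('n \<Rightarrow> nat) \<Rightarrow> real" where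
  "conv c d g = (\<Sum>a\<in>Bx g. c a * d (g - a))"

lemma Bx_iff: "a \<in> Bx g \<longleftrightarrow> (\<forall>i. a i \<le> g i)"
  unfolding Bx_def by (auto simp: PiE_UNIV_domain)

lemma real_has_sum_abs:
  fixes f :: "'a \<Rightarrow> real"
  assumes "(f has_sum s) A"
  shows "(\<lambda>x. \<bar>f x\<bar>) summable_on A"
proof -
  have "f summable_on A" using assms by (rule has_sum_imp_summable)
  hence "(\<lambda>x. norm (f x)) summable_on A" using summable_on_iff_abs_summable_on_real by blast
  thus ?thesis by simp
qed

lemma abs_summable_times:
  fixes f g :: "'a \<Rightarrow> real"
  assumes "(\<lambda>x. \<bar>f x\<bar>) summable_on UNIV" "(\<lambda>x. \<bar>g x\<bar>) summable_on UNIV"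
  shows "(\<lambda>(x,y). \<bar>f x * g y\<bar>) summable_on (UNIV \<times> UNIV)"
proof (rule nonneg_bdd_above_summable_on)
  show "bdd_above (sum (\<lambda>(x,y). \<bar>f x * g y\<bar>) ` {F. F \<subseteq> UNIV \<times> UNIV \<and> finite F})"
  proof (rule bdd_aboveI2)
    fix P :: "('a \<times> 'a) set" assume "P \<in> {F. F \<subseteq> UNIV \<times> UNIV \<and> finite F}"
    hence fin: "finite P" by simp
    have "(\<Sum>(x,y)\<in>P. \<bar>f x * g y\<bar>) \<le> (\<Sum>(x,y)\<in>fst ` P \<times> snd ` P. \<bar>f x * g y\<bar>)"
      by (rule sum_mono2) (use fin in \<open>auto simp: finite_cartesian_product intro: rev_image_eqI\<close>)
    also have "\<dots> = (\<Sum>x\<in>fst ` P. \<bar>f x\<bar>) * (\<Sum>y\<in>snd ` P. \<bar>g y\<bar>)"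
      by (simp add: sum_product sum.cartesian_product abs_mult)
    also have "\<dots> \<le> infsum (\<lambda>x. \<bar>f x\<bar>) UNIV * infsum (\<lambda>x. \<bar>g x\<bar>) UNIV"
    proof (rule mult_mono)
      show "(\<Sum>x\<in>fst ` P. \<bar>f x\<bar>) \<le> infsum (\<lambda>x. \<bar>f x\<bar>) UNIV"
        using finite_sum_le_has_sum[OF has_sum_infsum[OF assms(1)], of "fst ` P"] fin by simp
      show "(\<Sum>y\<in>snd ` P. \<bar>g y\<bar>) \<le> infsum (\<lambda>x. \<bar>g x\<bar>) UNIV"
        using finite_sum_le_has_sum[OF has_sum_infsum[OF assms(2)], of "snd ` P"] fin by simp
    qed (auto intro: sum_nonneg infsum_nonneg)
    finally show "(\<Sum>(x,y)\<in>P. \<bar>f x * g y\<bar>) \<le> infsum (\<lambda>x. \<bar>f x\<bar>) UNIV * infsum (\<lambda>x. \<bar>g x\<bar>) UNIV" .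
  qed
qed auto

lemma has_sum_times:
  fixes f g :: "'a \<Rightarrow> real"
  assumes f: "(f has_sum A) UNIV" and g: "(g has_sum B) UNIV"
  shows "((\<lambda>(x,y). f x * g y) has_sum (A * B)) (UNIV \<times> UNIV)"
proof (rule has_sum_SigmaI[where g="\<lambda>x. f x * B"])
  show "((\<lambda>y. case (x, y) of (x, y) \<Rightarrow> f x * g y) has_sum f x * B) UNIV" for x
    using has_sum_cmult_right[OF g, of "f x"] by simp
  show "((\<lambda>x. f x * B) has_sum A * B) UNIV" by (rule has_sum_cmult_left[OF f])
  have "(\<lambda>(x,y). \<bar>f x * g y\<bar>) summable_on (UNIV \<times> UNIV)"
    by (rule abs_summable_times[OF real_has_sum_abs[OF f] real_has_sum_abs[OF g]])
  hence "(\<lambda>z. norm ((\<lambda>(x,y). f x * g y) z)) summable_on (UNIV \<times> UNIV)"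
    by (simp add: case_prod_unfold)
  thus "(\<lambda>(x,y). f x * g y) summable_on (UNIV \<times> UNIV)"
    by (rule abs_summable_summable)
qed

lemma cauchy_product:
  fixes c d :: "('n::finite \<Rightarrow> nat) \<Rightarrow> real"
  assumes f: "((\<lambda>a. c a * mmono x a) has_sum A) UNIV"
    and g: "((\<lambda>a. d a * mmono x a) has_sum B) UNIV"
  shows "((\<lambda>g. conv c d g * mmono x g) has_sum (A * B)) UNIV"
proof -
  define P where "P = (\<lambda>(a::'n\<Rightarrow>nat, b::'n\<Rightarrow>nat). (c a * mmono x a) * (d b * mmono x b))"
  have HP: "(P has_sum (A * B)) (UNIV \<times> UNIV)"
    unfolding P_def by (rule has_sum_times[OF f g])
  define h where "h = (\<lambda>(g::'n\<Rightarrow>nat, a::'n\<Rightarrow>nat). (a, g - a))"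
  have bij: "bij_betw h (Sigma UNIV Bx) (UNIV \<times> UNIV)"
  proof (rule bij_betwI[where g="\<lambda>(a, b). (a + b, a)"])
    show "h \<in> Sigma UNIV Bx \<rightarrow> UNIV \<times> UNIV" by auto
    show "(\<lambda>(a, b). (a + b, a)) \<in> UNIV \<times> UNIV \<rightarrow> Sigma UNIV Bx"
      by (auto simp: Bx_iff)
    show "(\<lambda>(a, b). (a + b, a)) (h z) = z" if "z \<in> Sigma UNIV Bx" for z
      using that by (cases z) (auto simp: h_def Bx_iff fun_eq_iff)
    show "h ((\<lambda>(a, b). (a + b, a)) z) = z" if "z \<in> UNIV \<times> UNIV" for z
      by (cases z) (auto simp: h_def fun_eq_iff)
  qed
  have HP2: "((\<lambda>z. P (h z)) has_sum (A * B)) (Sigma UNIV Bx)"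
    using HP has_sum_reindex_bij_betw[OF bij, of P] by simp
  have inner: "((\<lambda>a. P (h (g, a))) has_sum (conv c d g * mmono x g)) (Bx g)" for g
  proof -
    have "P (h (g, a)) = c a * d (g - a) * mmono x g" if "a \<in> Bx g" for a
    proof -
      have "g = a + (g - a)" using that by (auto simp: Bx_iff fun_eq_iff)
      hence "mmono x g = mmono x a * mmono x (g - a)" by (metis mmono_add)
      thus ?thesis unfolding P_def h_def by simp
    qed
    hence "(\<Sum>a\<in>Bx g. P (h (g, a))) = conv c d g * mmono x g"
      unfolding conv_def by (simp add: sum_distrib_right)
    thus ?thesis using has_sum_finite[OF finite_Bx, of "\<lambda>a. P (h (g, a))" g] by simp
  qed
  show ?thesis
    by (rule has_sum_Sigma'[OF HP2]) (use inner in simp)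
qed



lemma mmono_0: "mmono (0::real^'n::finite) a = (if a = 0 then 1 else 0)"
proof (cases "a = 0")
  case True thus ?thesis by simp
next
  case False
  then obtain i where "a i \<noteq> 0" by (auto simp: fun_eq_iff)
  hence "mmono (0::real^'n) a = 0" unfolding mmono_def
    by (intro prod_zero) (auto intro!: bexI[of _ i])
  thus ?thesis using False by simp
qed

lemma has_sum_delta0:
  "((\<lambda>a::'n::finite\<Rightarrow>nat. (if a = 0 then v else 0)) has_sum v) UNIV"
proof -
  have "((\<lambda>a::'n\<Rightarrow>nat. (if a = 0 then v else 0)) has_sum v) {0}"
    using has_sum_finite[of "{0::'n\<Rightarrow>nat}" "\<lambda>a. (if a = 0 then v else 0)"] by simp
  thus ?thesis by (subst (asm) has_sum_cong_neutral[where T=UNIV]) auto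
qed

lemma coeff0:
  assumes "((\<lambda>a. c a * mmono (0::real^'n::finite) a) has_sum s) UNIV"
  shows "c 0 = s"
proof -
  have "((\<lambda>a. c a * mmono (0::real^'n) a) has_sum c 0) UNIV"
    using has_sum_delta0[of "c 0"] by (simp add: mmono_0 if_distrib cong: if_cong)
  thus ?thesis using assms has_sum_unique by blast
qed

primrec pw :: "(('n::finite \<Rightarrow> nat) \<Rightarrow> real) \<Rightarrow> nat \<Rightarrow> ('n \<Rightarrow> nat) \<Rightarrow> real" where
  "pw c 0 = (\<lambda>a. if a = 0 then 1 else 0)"
| "pw c (Suc k) = conv c (pw c k)"

lemma pw_series:
  assumes "((\<lambda>a. c a * mmono y a) has_sum s) UNIV"
  shows "((\<lambda>a. pw c k a * mmono y a) has_sum s^k) UNIV"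
proof (induction k)
  case 0
  have e: "(\<lambda>a. pw c 0 a * mmono y a) = (\<lambda>a. if a = 0 then 1 else 0)" by (rule ext) simp
  show ?case unfolding e using has_sum_delta0[of 1] by simp
next
  case (Suc k)
  show ?case using cauchy_product[OF assms Suc] by simp
qed

lemma pw_abs: "\<bar>pw c k a\<bar> \<le> pw (\<lambda>a. \<bar>c a\<bar>) k a"
proof (induction k arbitrary: a)
  case 0 thus ?case by simp
next
  case (Suc k)
  have "\<bar>pw c (Suc k) a\<bar> \<le> (\<Sum>b\<in>Bx a. \<bar>c b * pw c k (a - b)\<bar>)"
    unfolding pw.simps conv_def by (rule sum_abs)
  also have "\<dots> \<le> (\<Sum>b\<in>Bx a. \<bar>c b\<bar> * pw (\<lambda>a. \<bar>c a\<bar>) k (a - b))"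
    by (intro sum_mono) (auto simp: abs_mult intro: mult_left_mono Suc)
  finally show ?case by (simp add: conv_def)
qed

lemma pw_nonneg: "(\<And>a. c a \<ge> 0) \<Longrightarrow> pw c k a \<ge> 0"
  by (induction k arbitrary: a) (auto simp: conv_def intro!: sum_nonneg)

lemma mmono_abs_vec: "mmono (\<chi> i. \<bar>x$i\<bar>) a \<ge> 0"
  unfolding mmono_def by (auto intro: prod_nonneg)

lemma geom_has_sum:
  fixes q :: real assumes "\<bar>q\<bar> < 1"
  shows "((\<lambda>k. q^k) has_sum (1 / (1 - q))) UNIV"
proof (rule norm_summable_imp_has_sum)
  show "summable (\<lambda>n. norm (q ^ n))" using assms by (simp add: power_abs summable_geometric)
  show "(\<lambda>k. q^k) sums (1 / (1 - q))" using geometric_sums[of q] assms by simp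
qed



lemma recip_series:
  fixes c :: "('n::finite \<Rightarrow> nat) \<Rightarrow> real" and g :: "real^'n \<Rightarrow> real"
  assumes r: "r > 0"
    and ser: "\<And>x. norm x < r \<Longrightarrow> ((\<lambda>a. c a * mmono x a) has_sum g x) UNIV"
    and gnz: "g 0 \<noteq> 0"
  shows "\<exists>r'>0. \<exists>d. \<forall>x. norm x < r' \<longrightarrow> ((\<lambda>a. d a * mmono x a) has_sum (1 / g x)) UNIV"
proof -
  have c0: "c 0 = g 0" using coeff0[OF ser[of 0]] r by simp
  define c' where "c' a = (if a = 0 then 0 else - c a / g 0)" for a
  have ser': "((\<lambda>a. c' a * mmono x a) has_sum (1 - g x / g 0)) UNIV" if "norm x < r" for x
  proof -
    have e1: "(\<lambda>a. if a = 0 then c a * mmono x a / g 0 else 0) = (\<lambda>a. if a = 0 then c 0 / g 0 else 0)"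
      by (rule ext) simp
    have h1: "((\<lambda>a. if a = 0 then c a * mmono x a / g 0 else 0) has_sum (c 0 / g 0)) UNIV"
      unfolding e1 by (rule has_sum_delta0)
    have h2: "((\<lambda>a. c a * mmono x a / g 0) has_sum (g x / g 0)) UNIV"
      by (rule has_sum_divide_const[OF ser[OF that]])
    have "((\<lambda>a. (if a = 0 then c a * mmono x a / g 0 else 0) - c a * mmono x a / g 0) has_sum (c 0 / g 0 - g x / g 0)) UNIV"
      by (rule has_sum_diff'[OF h1 h2])
    moreover have "(\<lambda>a. (if a = 0 then c a * mmono x a / g 0 else 0) - c a * mmono x a / g 0) = (\<lambda>a. c' a * mmono x a)"
      by (rule ext) (simp add: c'_def)
    ultimately show ?thesis using c0 gnz by simp
  qed
  define r0 where "r0 = r / (2 * real CARD('n))"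
  have r0: "r0 > 0" unfolding r0_def using r by simp
  have r0r: "r0 \<le> r / 2" unfolding r0_def using r
    by (simp add: field_simps)
  define z :: "real^'n" where "z = (\<chi> i. r0)"
  have nz: "norm z < r"
  proof -
    have "norm z \<le> (\<Sum>i\<in>UNIV. \<bar>z$i\<bar>)" by (rule norm_le_l1_cart)
    also have "\<dots> = real CARD('n) * r0" using r0 by (simp add: z_def)
    also have "\<dots> = r / 2" unfolding r0_def by simp
    finally show ?thesis using r by simp
  qed
  have mz: "mmono z a = r0 ^ (\<Sum>i\<in>UNIV. a i)" for a
    by (simp add: mmono_def z_def power_sum)
  have mz0: "mmono z a \<ge> 0" for a using mz r0 by simp
  have az: "(\<lambda>a. \<bar>c' a\<bar> * mmono z a) summable_on UNIV"
    using real_has_sum_abs[OF ser'[OF nz]] mz0 by (simp add: abs_mult)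
  define A where "A = infsum (\<lambda>a. \<bar>c' a\<bar> * mmono z a) UNIV"
  have A0: "A \<ge> 0" unfolding A_def by (rule infsum_nonneg) (simp add: mz0)
  define \<epsilon> where "\<epsilon> = 1 / (2 * (A + 1))"
  have eps: "0 < \<epsilon>" "\<epsilon> \<le> 1" "\<epsilon> * A \<le> 1/2"
    unfolding \<epsilon>_def using A0 by (auto simp: field_simps)
  define d where "d a = infsum (\<lambda>k. pw c' k a) UNIV / g 0" for a
  show ?thesis
  proof (intro exI[of _ "\<epsilon> * r0"] conjI exI[of _ d] allI impI)
    show "\<epsilon> * r0 > 0" using eps r0 by simp
    fix x :: "real^'n" assume x: "norm x < \<epsilon> * r0"
    have xr: "norm x < r"
    proof -
      have "\<epsilon> * r0 \<le> 1 * r0" using eps r0 by (intro mult_right_mono) auto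
      thus ?thesis using x r0r r by simp
    qed
    define ax where "ax = (\<chi> i. \<bar>x$i\<bar>)"
    have max: "mmono ax a \<ge> 0" for a unfolding ax_def by (rule mmono_abs_vec)
    have mx: "\<bar>mmono x a\<bar> = mmono ax a" for a by (simp add: abs_mmono ax_def)
    have cmp: "\<bar>c' a\<bar> * mmono ax a \<le> \<epsilon> * (\<bar>c' a\<bar> * mmono z a)" for a
    proof (cases "a = 0")
      case True thus ?thesis by (simp add: c'_def)
    next
      case False
      then obtain i0 where "a i0 \<noteq> 0" by (auto simp: fun_eq_iff)
      hence deg: "(\<Sum>i\<in>UNIV. a i) \<ge> 1"
        using member_le_sum[of i0 UNIV a] by simp
      have "mmono ax a \<le> (\<Prod>i\<in>UNIV. (\<epsilon> * r0) ^ (a i))"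
        unfolding mmono_def ax_def
      proof (intro prod_mono conjI)
        fix i :: 'n
        have "\<bar>x$i\<bar> \<le> \<epsilon> * r0" using component_le_norm_cart[of x i] x by simp
        thus "0 \<le> (\<chi> i. \<bar>x$i\<bar>) $ i ^ a i" "(\<chi> i. \<bar>x$i\<bar>) $ i ^ a i \<le> (\<epsilon> * r0) ^ a i"
          by (auto intro: power_mono)
      qed
      also have "\<dots> = \<epsilon> ^ (\<Sum>i\<in>UNIV. a i) * r0 ^ (\<Sum>i\<in>UNIV. a i)"
        by (simp add: power_sum power_mult_distrib prod.distrib)
      also have "\<dots> \<le> \<epsilon> * r0 ^ (\<Sum>i\<in>UNIV. a i)"
        using power_decreasing[OF deg, of \<epsilon>] eps r0 by (intro mult_right_mono) auto
      finally have "mmono ax a \<le> \<epsilon> * mmono z a" unfolding mz .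
      thus ?thesis by (metis abs_ge_zero mult.left_commute mult_left_mono)
    qed
    have sa: "(\<lambda>a. \<bar>c' a\<bar> * mmono ax a) summable_on UNIV"
      by (rule summable_on_comparison_test[OF summable_on_cmult_right[OF az, of \<epsilon>]])
         (use cmp max in auto)
    define \<sigma> where "\<sigma> = infsum (\<lambda>a. \<bar>c' a\<bar> * mmono ax a) UNIV"
    have sig0: "0 \<le> \<sigma>" unfolding \<sigma>_def by (rule infsum_nonneg) (simp add: max)
    have "\<sigma> \<le> infsum (\<lambda>a. \<epsilon> * (\<bar>c' a\<bar> * mmono z a)) UNIV"
      unfolding \<sigma>_def by (rule infsum_mono[OF sa summable_on_cmult_right[OF az]]) (rule cmp)
    also have "\<dots> = \<epsilon> * A" unfolding A_def by (rule infsum_cmult_right')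
    finally have sig1: "\<sigma> \<le> 1/2" using eps by simp
    have hsa: "((\<lambda>a. \<bar>c' a\<bar> * mmono ax a) has_sum \<sigma>) UNIV"
      unfolding \<sigma>_def by (rule has_sum_infsum[OF sa])
    define \<rho> where "\<rho> = 1 - g x / g 0"
    have hr: "((\<lambda>a. c' a * mmono x a) has_sum \<rho>) UNIV" unfolding \<rho>_def by (rule ser'[OF xr])
    have rs: "\<bar>\<rho>\<bar> \<le> \<sigma>"
    proof -
      have "\<rho> \<le> \<sigma>"
        by (rule has_sum_mono[OF hr hsa]) (metis abs_ge_self abs_mult mx)
      moreover have "- \<rho> \<le> \<sigma>"
      proof (rule has_sum_mono[OF _ hsa])
        show "((\<lambda>a. - (c' a * mmono x a)) has_sum - \<rho>) UNIV" using hr has_sum_uminus[where f="\<lambda>a. c' a * mmono x a" and a="-\<rho>" and A=UNIV] by simp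
        show "- (c' a * mmono x a) \<le> \<bar>c' a\<bar> * mmono ax a" for a
          by (metis abs_ge_minus_self abs_mult mx)
      qed
      ultimately show ?thesis by linarith
    qed
    define F where "F = (\<lambda>(k::nat, a::'n\<Rightarrow>nat). pw c' k a * mmono x a)"
    have Fk: "((\<lambda>a. F (k, a)) has_sum \<rho>^k) UNIV" for k
      unfolding F_def using pw_series[OF hr] by simp
    have hapw: "((\<lambda>a. pw (\<lambda>a. \<bar>c' a\<bar>) k a * mmono ax a) has_sum \<sigma>^k) UNIV" for k
      by (rule pw_series[OF hsa])
    have Fabs: "\<bar>F (k, a)\<bar> \<le> pw (\<lambda>a. \<bar>c' a\<bar>) k a * mmono ax a" for k a
      unfolding F_def by (simp add: abs_mult mx) (intro mult_right_mono pw_abs max)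
    have geo: "((\<lambda>k. \<sigma>^k) has_sum (1 / (1 - \<sigma>))) UNIV"
      by (rule geom_has_sum) (use sig0 sig1 in auto)
    have Fsum: "F summable_on UNIV \<times> UNIV"
    proof -
      have "(\<lambda>z. norm (F z)) summable_on Sigma UNIV (\<lambda>_. UNIV)"
      proof (rule iffD2[OF Infinite_Sum.abs_summable_on_Sigma_iff], intro conjI ballI)
        fix k :: nat
        show "(\<lambda>a. norm (F (k, a))) summable_on UNIV"
          using real_has_sum_abs[OF Fk[of k]] by simp
      next
        have le: "infsum (\<lambda>a. norm (F (k, a))) UNIV \<le> \<sigma>^k" for k
        proof -
          have "infsum (\<lambda>a. norm (F (k, a))) UNIV \<le> infsum (\<lambda>a. pw (\<lambda>a. \<bar>c' a\<bar>) k a * mmono ax a) UNIV"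
            by (rule infsum_mono) (use real_has_sum_abs[OF Fk[of k]] has_sum_imp_summable[OF hapw[of k]] Fabs in auto)
          also have "\<dots> = \<sigma>^k" using hapw[of k] by (rule infsumI)
          finally show ?thesis .
        qed
        have "(\<lambda>k. infsum (\<lambda>a. norm (F (k, a))) UNIV) summable_on UNIV"
          by (rule summable_on_comparison_test[OF has_sum_imp_summable[OF geo]])
             (use le in \<open>auto intro: infsum_nonneg\<close>)
        thus "(\<lambda>k. norm (infsum (\<lambda>a. norm (F (k, a))) UNIV)) summable_on UNIV"
          by (simp add: infsum_nonneg)
      qed
      hence "(\<lambda>z. norm (F z)) summable_on UNIV \<times> UNIV" by simp
      thus ?thesis by (rule abs_summable_summable)
    qed
    then obtain S where HS: "(F has_sum S) (UNIV \<times> UNIV)" unfolding summable_on_def by blast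
    have "((\<lambda>k. \<rho>^k) has_sum S) UNIV"
      by (rule has_sum_Sigma'[OF HS]) (rule Fk)
    moreover have "((\<lambda>k. \<rho>^k) has_sum (1 / (1 - \<rho>))) UNIV"
      by (rule geom_has_sum) (use rs sig1 in auto)
    ultimately have S1: "S = 1 / (1 - \<rho>)" using has_sum_unique by blast
    have HS2: "((\<lambda>(a, k). F (k, a)) has_sum S) (UNIV \<times> UNIV)"
      using HS has_sum_swap by blast
    have inner: "((\<lambda>k. (\<lambda>(a, k). F (k, a)) (a, k)) has_sum (infsum (\<lambda>k. pw c' k a) UNIV * mmono x a)) UNIV" for a
    proof -
      have "(\<lambda>k. F (k, a)) summable_on UNIV"
        using summable_on_SigmaD1[of "\<lambda>a k. F (k, a)" UNIV "\<lambda>_. UNIV" a] has_sum_imp_summable[OF HS2]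
        by (simp add: case_prod_unfold)
      hence "((\<lambda>k. F (k, a)) has_sum infsum (\<lambda>k. F (k, a)) UNIV) UNIV" by (rule has_sum_infsum)
      moreover have "infsum (\<lambda>k. F (k, a)) UNIV = infsum (\<lambda>k. pw c' k a) UNIV * mmono x a"
        unfolding F_def by (simp add: infsum_cmult_left')
      ultimately show ?thesis by simp
    qed
    have "((\<lambda>a. infsum (\<lambda>k. pw c' k a) UNIV * mmono x a) has_sum S) UNIV"
      by (rule has_sum_Sigma'[OF HS2]) (rule inner)
    hence "((\<lambda>a. infsum (\<lambda>k. pw c' k a) UNIV * mmono x a / g 0) has_sum (S / g 0)) UNIV"
      by (rule has_sum_divide_const)
    moreover have "S / g 0 = 1 / g x"
      unfolding S1 \<rho>_def using gnz by (simp add: field_simps)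
    ultimately show "((\<lambda>a. d a * mmono x a) has_sum (1 / g x)) UNIV"
      unfolding d_def by (simp add: field_simps)
  qed
qed



context
  fixes K :: "'a \<Rightarrow> 'a \<Rightarrow> real" and H :: "('a \<Rightarrow> real) set" and ip
  assumes rk: "is_rkhs K H ip"
begin

lemma rk_zero: "(\<lambda>x. 0) \<in> H" using rk unfolding is_rkhs_def by (elim conjE)
lemma rk_add: "f \<in> H \<Longrightarrow> g \<in> H \<Longrightarrow> (\<lambda>x. f x + g x) \<in> H" using rk unfolding is_rkhs_def by (elim conjE) blast
lemma rk_smult: "f \<in> H \<Longrightarrow> (\<lambda>x. c * f x) \<in> H" using rk unfolding is_rkhs_def by (elim conjE) blast
lemma rk_sym: "f \<in> H \<Longrightarrow> g \<in> H \<Longrightarrow> ip f g = ip g f" using rk unfolding is_rkhs_def by (elim conjE) blast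
lemma rk_ladd: "f \<in> H \<Longrightarrow> g \<in> H \<Longrightarrow> h \<in> H \<Longrightarrow> ip (\<lambda>x. f x + g x) h = ip f h + ip g h"
  using rk unfolding is_rkhs_def by (elim conjE) blast
lemma rk_lsmult: "f \<in> H \<Longrightarrow> g \<in> H \<Longrightarrow> ip (\<lambda>x. c * f x) g = c * ip f g"
  using rk unfolding is_rkhs_def by (elim conjE) blast
lemma rk_pos: "f \<in> H \<Longrightarrow> 0 \<le> ip f f" using rk unfolding is_rkhs_def by (elim conjE) blast
lemma rk_ker: "(\<lambda>x. K x y) \<in> H" using rk unfolding is_rkhs_def by (elim conjE) blast
lemma rk_rep: "f \<in> H \<Longrightarrow> ip f (\<lambda>x. K x y) = f y" using rk unfolding is_rkhs_def by (elim conjE) blast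

lemma rk_radd:
  assumes "f \<in> H" "g \<in> H" "h \<in> H" shows "ip h (\<lambda>x. f x + g x) = ip h f + ip h g"
proof -
  have "ip h (\<lambda>x. f x + g x) = ip (\<lambda>x. f x + g x) h" by (rule rk_sym[OF assms(3) rk_add[OF assms(1,2)]])
  also have "\<dots> = ip f h + ip g h" by (rule rk_ladd[OF assms])
  also have "\<dots> = ip h f + ip h g" using rk_sym assms by simp
  finally show ?thesis .
qed

lemma rk_rsmult:
  assumes "f \<in> H" "g \<in> H" shows "ip g (\<lambda>x. c * f x) = c * ip g f"
proof -
  have "ip g (\<lambda>x. c * f x) = ip (\<lambda>x. c * f x) g" by (rule rk_sym[OF assms(2) rk_smult[OF assms(1)]])
  also have "\<dots> = c * ip f g" by (rule rk_lsmult[OF assms])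
  also have "\<dots> = c * ip g f" using rk_sym assms by simp
  finally show ?thesis .
qed

lemma rk_span: "finite J \<Longrightarrow> (\<lambda>x. \<Sum>j\<in>J. lam j * K x (y j)) \<in> H"
proof (induction J rule: finite_induct)
  case empty thus ?case using rk_zero by simp
next
  case (insert a J)
  have "(\<lambda>x. lam a * K x (y a) + (\<Sum>j\<in>J. lam j * K x (y j))) \<in> H"
    by (intro rk_add rk_smult rk_ker insert.IH)
  thus ?case using insert by simp
qed

lemma rk_ip_span:
  assumes f: "f \<in> H" and J: "finite J"
  shows "ip f (\<lambda>x. \<Sum>j\<in>J. lam j * K x (y j)) = (\<Sum>j\<in>J. lam j * f (y j))"
  using J
proof (induction J rule: finite_induct)
  case empty
  have "ip f (\<lambda>x. 0 * 0) = 0 * ip f (\<lambda>x. 0)" by (rule rk_rsmult[OF rk_zero f])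
  thus ?case by simp
next
  case (insert a J)
  have "ip f (\<lambda>x. lam a * K x (y a) + (\<Sum>j\<in>J. lam j * K x (y j))) = ip f (\<lambda>x. lam a * K x (y a)) + ip f (\<lambda>x. \<Sum>j\<in>J. lam j * K x (y j))"
    by (intro rk_radd rk_smult rk_ker rk_span insert f)
  also have "ip f (\<lambda>x. lam a * K x (y a)) = lam a * f (y a)"
    by (simp add: rk_rsmult rk_ker f rk_rep)
  finally show ?case using insert by simp
qed

lemma quad_disc:
  fixes A B C :: real
  assumes "\<And>c. 0 \<le> A + 2 * B * c + C * c^2" and "C \<ge> 0"
  shows "B^2 \<le> A * C"
proof (cases "C > 0")
  case True
  have "0 \<le> A + 2 * B * (- B / C) + C * (- B / C)^2" by (rule assms)
  hence "0 \<le> A - B^2 / C" using True by (simp add: power2_eq_square field_simps)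
  thus ?thesis using True by (simp add: field_simps)
next
  case False
  hence C: "C = 0" using assms(2) by simp
  have B: "B = 0"
  proof (rule ccontr)
    assume "B \<noteq> 0"
    have "0 \<le> A + 2 * B * (- (\<bar>A\<bar> + 1) / (2 * B)) + C * (- (\<bar>A\<bar> + 1) / (2 * B))^2" by (rule assms)
    moreover have "2 * B * (- (\<bar>A\<bar> + 1) / (2 * B)) = - (\<bar>A\<bar> + 1)" using \<open>B \<noteq> 0\<close> by simp
    ultimately show False using C by simp
  qed
  show ?thesis using B C by simp
qed

lemma rk_cs: "f \<in> H \<Longrightarrow> g \<in> H \<Longrightarrow> (ip f g)^2 \<le> ip f f * ip g g"
proof (rule quad_disc)
  fix c :: real
  assume f: "f \<in> H" and g: "g \<in> H"
  have cg: "(\<lambda>x. c * g x) \<in> H" by (rule rk_smult[OF g])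
  have fg: "(\<lambda>x. f x + c * g x) \<in> H" by (rule rk_add[OF f cg])
  have "ip (\<lambda>x. f x + c * g x) (\<lambda>x. f x + c * g x) = ip f (\<lambda>x. f x + c * g x) + ip (\<lambda>x. c * g x) (\<lambda>x. f x + c * g x)"
    by (rule rk_ladd[OF f cg fg])
  also have "ip f (\<lambda>x. f x + c * g x) = ip f f + c * ip f g"
    by (simp add: rk_radd[OF f cg f] rk_rsmult[OF g f])
  also have "ip (\<lambda>x. c * g x) (\<lambda>x. f x + c * g x) = c * (ip g f + c * ip g g)"
    by (simp add: rk_lsmult[OF g fg] rk_radd[OF f cg g] rk_rsmult[OF g g])
  finally have "ip (\<lambda>x. f x + c * g x) (\<lambda>x. f x + c * g x) = ip f f + 2 * ip f g * c + ip g g * c^2"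
    using rk_sym[OF f g] by (simp add: algebra_simps power2_eq_square)
  thus "0 \<le> ip f f + 2 * ip f g * c + ip g g * c^2" using rk_pos[OF fg] by simp
next
  show "g \<in> H \<Longrightarrow> 0 \<le> ip g g" by (rule rk_pos)
qed

lemma rk_gram: "finite J \<Longrightarrow> ip (\<lambda>x. \<Sum>j\<in>J. lam j * K x (y j)) (\<lambda>x. \<Sum>j\<in>J. lam j * K x (y j))
    = (\<Sum>j\<in>J. \<Sum>l\<in>J. lam j * lam l * K (y j) (y l))"
  by (simp add: rk_ip_span rk_span sum_distrib_left mult_ac)

lemma rk_Wbound:
  assumes f: "f \<in> H" and J: "finite J"
  shows "(\<Sum>j\<in>J. lam j * f (y j))^2 \<le> ip f f * (\<Sum>j\<in>J. \<Sum>l\<in>J. lam j * lam l * K (y j) (y l))"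
  using rk_cs[OF f rk_span[OF J, of lam y]] unfolding rk_ip_span[OF f J] rk_gram[OF J] .

lemma rk_gram_nonneg: "finite J \<Longrightarrow> 0 \<le> (\<Sum>j\<in>J. \<Sum>l\<in>J. lam j * lam l * K (y j) (y l))"
  using rk_pos[OF rk_span, of J lam y] rk_gram[of J lam y] by simp

end


lemma koop_gram:
  fixes F :: "real^'n::finite \<Rightarrow> real^'n" and H :: "(real^'n \<Rightarrow> real) set"
  assumes rk: "is_rkhs gauss_kernel H ip" and maps: "\<forall>g\<in>H. g \<circ> F \<in> H"
    and bC: "\<forall>g\<in>H. sqrt (ip (g \<circ> F) (g \<circ> F)) \<le> C * sqrt (ip g g)"
    and J: "finite J"
  shows "(\<Sum>j\<in>J. \<Sum>l\<in>J. lam j * lam l * gauss_kernel (F (y j)) (F (y l)))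
           \<le> C^2 * (\<Sum>j\<in>J. \<Sum>l\<in>J. lam j * lam l * gauss_kernel (y j) (y l))"
proof -
  define g where "g = (\<lambda>x. \<Sum>j\<in>J. lam j * gauss_kernel x (F (y j)))"
  define s where "s = (\<lambda>x. \<Sum>j\<in>J. lam j * gauss_kernel x (y j))"
  have gH: "g \<in> H" unfolding g_def by (rule rk_span[OF rk J])
  have sH: "s \<in> H" unfolding s_def by (rule rk_span[OF rk J])
  have gFH: "g \<circ> F \<in> H" using maps gH by blast
  have "ip g g = (\<Sum>j\<in>J. lam j * g (F (y j)))"
    unfolding g_def by (subst rk_ip_span[OF rk _ J]) (use gH g_def in auto)
  also have "\<dots> = ip (g \<circ> F) s"
    unfolding s_def by (subst rk_ip_span[OF rk gFH J]) simp
  finally have e: "ip g g = ip (g \<circ> F) s" .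
  have "(ip (g \<circ> F) s)^2 \<le> ip (g \<circ> F) (g \<circ> F) * ip s s" by (rule rk_cs[OF rk gFH sH])
  hence "\<bar>ip (g \<circ> F) s\<bar> \<le> sqrt (ip (g \<circ> F) (g \<circ> F)) * sqrt (ip s s)"
    by (metis real_sqrt_abs real_sqrt_le_mono real_sqrt_mult)
  also have "\<dots> \<le> C * sqrt (ip g g) * sqrt (ip s s)"
    using bC gH rk_pos[OF rk sH] by (intro mult_right_mono) auto
  finally have le: "ip g g \<le> C * sqrt (ip g g) * sqrt (ip s s)" unfolding e by simp
  have gg: "ip g g \<ge> 0" by (rule rk_pos[OF rk gH])
  have ss: "ip s s \<ge> 0" by (rule rk_pos[OF rk sH])
  have "ip g g \<le> C^2 * ip s s"
  proof (cases "ip g g = 0")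
    case True thus ?thesis using ss by simp
  next
    case False
    define a where "a = sqrt (ip g g)"
    define b where "b = sqrt (ip s s)"
    have a: "a > 0" unfolding a_def using gg False by simp
    have "a * a \<le> C * a * b" using le gg unfolding a_def b_def by (simp add: real_sqrt_mult_self)
    hence "a \<le> C * b" using a by (simp add: mult.commute mult.left_commute)
    hence "a^2 \<le> (C * b)^2" using a by (intro power_mono) auto
    thus ?thesis using gg ss unfolding a_def b_def by (simp add: power_mult_distrib)
  qed
  thus ?thesis
    unfolding g_def s_def rk_gram[OF rk J] .
qed

lemma comp_W:
  fixes F :: "real^'n::finite \<Rightarrow> real^'n" and H :: "(real^'n \<Rightarrow> real) set"
  assumes rk: "is_rkhs gauss_kernel H ip" and maps: "\<forall>g\<in>H. g \<circ> F \<in> H"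
    and bC: "\<forall>g\<in>H. sqrt (ip (g \<circ> F) (g \<circ> F)) \<le> C * sqrt (ip g g)"
    and M: "M \<ge> 0"
    and W: "\<And>(J::'j set) lam y. finite J \<Longrightarrow>
      (\<Sum>j\<in>J. lam j * phi (y j))^2 \<le> M * (\<Sum>j\<in>J. \<Sum>l\<in>J. lam j * lam l * gauss_kernel (y j) (y l))"
    and J: "finite (J::'j set)"
  shows "(\<Sum>j\<in>J. lam j * phi (F (y j)))^2 \<le> (M * C^2) * (\<Sum>j\<in>J. \<Sum>l\<in>J. lam j * lam l * gauss_kernel (y j) (y l))"
proof -
  have "(\<Sum>j\<in>J. lam j * phi (F (y j)))^2 \<le> M * (\<Sum>j\<in>J. \<Sum>l\<in>J. lam j * lam l * gauss_kernel (F (y j)) (F (y l)))"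
    using W[OF J, of lam "\<lambda>j. F (y j)"] .
  also have "\<dots> \<le> M * (C^2 * (\<Sum>j\<in>J. \<Sum>l\<in>J. lam j * lam l * gauss_kernel (y j) (y l)))"
    using koop_gram[OF rk maps bC J] M by (intro mult_left_mono) auto
  finally show ?thesis by (simp add: mult_ac)
qed

lemma gauss_self: "gauss_kernel x x = 1"
  by (simp add: gauss_kernel_def)

lemma W_ker0:
  fixes H :: "(real^'n::finite \<Rightarrow> real) set" and y :: "'j \<Rightarrow> real^'n"
  assumes rk: "is_rkhs gauss_kernel H ip" and J: "finite J"
  shows "(\<Sum>j\<in>J. lam j * gauss_kernel (y j) 0)^2 \<le> 1 * (\<Sum>j\<in>J. \<Sum>l\<in>J. lam j * lam l * gauss_kernel (y j) (y l))"
proof -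
  have kH: "(\<lambda>x. gauss_kernel x 0) \<in> H" by (rule rk_ker[OF rk])
  have "ip (\<lambda>x. gauss_kernel x 0) (\<lambda>x. gauss_kernel x 0) = 1"
    using rk_rep[OF rk kH, of 0] by (simp add: gauss_self)
  thus ?thesis using rk_Wbound[OF rk kH J, of lam y] by simp
qed



lemma norm_axis_sq:
  fixes z :: "real^'n::finite"
  shows "(norm (z - t *\<^sub>R axis i 1))^2 = z \<bullet> z - 2 * t * z$i + t^2"
  unfolding power2_norm_eq_inner
  by (simp add: inner_diff_left inner_diff_right inner_axis inner_commute algebra_simps power2_eq_square)

lemma gauss_deriv:
  fixes z :: "real^'n::finite"
  shows "((\<lambda>t. gauss_kernel z (t *\<^sub>R axis i 1)) has_field_derivative (z$i * gauss_kernel z 0)) (at 0)"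
proof -
  have e: "(\<lambda>t. gauss_kernel z (t *\<^sub>R axis i 1)) = (\<lambda>t. exp (- (z \<bullet> z - 2 * t * z$i + t^2) / 2))"
    by (rule ext) (simp add: gauss_kernel_def norm_axis_sq)
  have "((\<lambda>t. exp (- (z \<bullet> z - 2 * t * z$i + t^2) / 2)) has_field_derivative
          exp (- (z \<bullet> z - 2 * 0 * z$i + 0^2) / 2) * (- (0 - 2 * 1 * z$i + 2 * 0) / 2)) (at 0)"
    by (auto intro!: derivative_eq_intros)
  moreover have "gauss_kernel z 0 = exp (- (z \<bullet> z) / 2)"
    by (simp add: gauss_kernel_def power2_norm_eq_inner)
  ultimately show ?thesis unfolding e by (simp add: mult.commute)
qed

lemma W_phi:
  fixes H :: "(real^'n::finite \<Rightarrow> real) set" and y :: "'j \<Rightarrow> real^'n"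
  assumes rk: "is_rkhs gauss_kernel H ip" and J: "finite J"
  shows "(\<Sum>j\<in>J. lam j * ((y j)$i * gauss_kernel (y j) 0))^2
           \<le> 1 * (\<Sum>j\<in>J. \<Sum>l\<in>J. lam j * lam l * gauss_kernel (y j) (y l))"
proof -
  define e :: "real^'n" where "e = axis i 1"
  define Gr where "Gr = (\<Sum>j\<in>J. \<Sum>l\<in>J. lam j * lam l * gauss_kernel (y j) (y l))"
  have Gr0: "Gr \<ge> 0" unfolding Gr_def by (rule rk_gram_nonneg[OF rk J])
  define psi where "psi t z = (gauss_kernel z (t *\<^sub>R e) - gauss_kernel z 0) / t" for t z
  have bnd: "(\<Sum>j\<in>J. lam j * psi t (y j))^2 \<le> Gr" if t: "t \<noteq> 0" for t
  proof -
    define l2 :: "nat \<Rightarrow> real" where "l2 j = (if j = 0 then 1 / t else - 1 / t)" for j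
    define p2 :: "nat \<Rightarrow> real^'n" where "p2 j = (if j = 0 then t *\<^sub>R e else 0)" for j
    have fin2: "finite {0::nat, 1}" by simp
    have ps: "psi t = (\<lambda>x. \<Sum>j\<in>{0::nat, 1}. l2 j * gauss_kernel x (p2 j))"
      by (rule ext) (simp add: psi_def l2_def p2_def diff_divide_distrib)
    have pH: "psi t \<in> H" unfolding ps by (rule rk_span[OF rk fin2])
    have "ip (psi t) (psi t) = (\<Sum>j\<in>{0::nat, 1}. \<Sum>l\<in>{0::nat, 1}. l2 j * l2 l * gauss_kernel (p2 j) (p2 l))"
      unfolding ps by (rule rk_gram[OF rk fin2])
    also have "\<dots> = (2 - 2 * exp (- (t^2) / 2)) / t^2"
    proof -
      have k1: "gauss_kernel (t *\<^sub>R e) 0 = exp (- (t^2) / 2)" "gauss_kernel 0 (t *\<^sub>R e) = exp (- (t^2) / 2)"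
        by (simp_all add: gauss_kernel_def e_def)
      show ?thesis
        by (simp add: l2_def p2_def gauss_self k1 power2_eq_square field_simps) (simp add: diff_divide_distrib)
    qed
    also have "\<dots> \<le> 1"
    proof -
      have "1 + (- (t^2) / 2) \<le> exp (- (t^2) / 2)" by (rule exp_ge_add_one_self)
      hence "2 - 2 * exp (- (t^2) / 2) \<le> t^2" by simp
      thus ?thesis using t by (simp add: divide_le_eq_1)
    qed
    finally have ipb: "ip (psi t) (psi t) \<le> 1" .
    have "(\<Sum>j\<in>J. lam j * psi t (y j))^2 \<le> ip (psi t) (psi t) * Gr"
      unfolding Gr_def by (rule rk_Wbound[OF rk pH J])
    also have "\<dots> \<le> 1 * Gr" using ipb Gr0 by (intro mult_right_mono) auto
    finally show ?thesis by simp
  qed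
  have lim: "((\<lambda>t. (\<Sum>j\<in>J. lam j * psi t (y j))^2) \<longlongrightarrow>
              (\<Sum>j\<in>J. lam j * ((y j)$i * gauss_kernel (y j) 0))^2) (at 0)"
  proof (intro tendsto_intros)
    fix j
    have "((\<lambda>t. (gauss_kernel (y j) (t *\<^sub>R e) - gauss_kernel (y j) (0 *\<^sub>R e)) / (t - 0)) \<longlongrightarrow>
            (y j)$i * gauss_kernel (y j) 0) (at 0)"
      using gauss_deriv[of "y j" i] unfolding has_field_derivative_iff e_def by simp
    thus "((\<lambda>t. psi t (y j)) \<longlongrightarrow> (y j)$i * gauss_kernel (y j) 0) (at 0)"
      unfolding psi_def by simp
  qed
  have ev: "eventually (\<lambda>t. (\<Sum>j\<in>J. lam j * psi t (y j))^2 \<le> Gr) (at (0::real))"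
    unfolding eventually_at_filter by (rule always_eventually) (auto intro: bnd)
  have "(\<Sum>j\<in>J. lam j * ((y j)$i * gauss_kernel (y j) 0))^2 \<le> Gr"
    by (rule tendsto_le[OF _ tendsto_const lim ev]) simp
  thus ?thesis unfolding Gr_def by simp
qed



definition ge :: "nat \<Rightarrow> real" where
  "ge k = (if even k then (-1/2)^(k div 2) / fact (k div 2) else 0)"

lemma ge_has_sum: "((\<lambda>k. ge k * x^k) has_sum exp (- (x^2) / 2)) UNIV"
proof -
  have "((\<lambda>m. (- (x^2) / 2)^m / fact m) has_sum exp (- (x^2) / 2)) UNIV" by (rule exp_has_sum)
  moreover have "(- (x^2) / 2)^m / fact m = ge (2 * m) * x^(2 * m)" for m
  proof -
    have e1: "x^(2*m) = (x^2)^m" by (simp add: power_mult)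
    have e2: "(- (x^2) / 2)^m = (-1/2)^m * (x^2)^m" by (simp add: power_mult_distrib[symmetric])
    show ?thesis unfolding e1 e2 ge_def by simp
  qed
  ultimately have "((\<lambda>m. ge (2 * m) * x^(2 * m)) has_sum exp (- (x^2) / 2)) UNIV" by simp
  hence "((\<lambda>k. ge k * x^k) has_sum exp (- (x^2) / 2)) ((\<lambda>m. 2 * m) ` UNIV)"
    by (subst has_sum_reindex) (auto simp: inj_on_def o_def)
  thus ?thesis
    by (subst (asm) has_sum_cong_neutral[where T=UNIV]) (auto simp: ge_def elim!: evenE)
qed

lemma gauss_series:
  fixes h :: "real^'n::finite"
  shows "((\<lambda>g. (\<Prod>i\<in>UNIV. ge (g i)) * mmono h g) has_sum exp (- ((norm h)^2) / 2)) UNIV"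
proof -
  have "((\<lambda>g::'n\<Rightarrow>nat. \<Prod>i\<in>UNIV. ge (g i) * (h$i)^(g i)) has_sum (\<Prod>i\<in>UNIV. exp (- ((h$i)^2) / 2))) UNIV"
  proof (rule has_sum_prod_multi)
    fix i
    show "((\<lambda>k. ge k * (h$i)^k) has_sum exp (- ((h$i)^2) / 2)) UNIV" by (rule ge_has_sum)
    show "(\<lambda>k. norm (ge k * (h$i)^k)) summable_on UNIV"
      using real_has_sum_abs[OF ge_has_sum[of "h$i"]] by simp
  qed
  moreover have "(\<Prod>i\<in>UNIV. exp (- ((h$i)^2) / 2)) = exp (- ((norm h)^2) / 2)"
  proof -
    have "(norm h)^2 = (\<Sum>i\<in>UNIV. (h$i)^2)"
      unfolding power2_norm_eq_inner inner_vec_def by (simp add: power2_eq_square)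
    thus ?thesis by (simp add: exp_sum[symmetric] sum_divide_distrib[symmetric] sum_negf)
  qed
  moreover have "(\<Prod>i\<in>UNIV. ge (g i) * (h$i)^(g i)) = (\<Prod>i\<in>UNIV. ge (g i)) * mmono h g" for g
    by (simp add: mmono_def prod.distrib)
  ultimately show ?thesis by simp
qed

lemma gauss_shift:
  fixes a u v :: "real^'n::finite"
  shows "exp ((norm u)^2 / 2) * exp ((norm v)^2 / 2) * gauss_kernel (a + u) (a + v) = exp (u \<bullet> v)"
proof -
  have "(norm (u - v))^2 = (norm u)^2 + (norm v)^2 - 2 * (u \<bullet> v)"
    unfolding power2_norm_eq_inner by (simp add: inner_diff_left inner_diff_right inner_commute)
  thus ?thesis
    by (simp add: gauss_kernel_def exp_add[symmetric] field_simps)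
qed

lemma W_analytic:
  fixes f :: "real^'n::finite \<Rightarrow> real"
  assumes M: "M \<ge> 0"
    and W: "\<And>(J :: ((('n\<Rightarrow>nat)\<times>real)\<times>('n\<Rightarrow>nat)) option set) lam y. finite J \<Longrightarrow>
      (\<Sum>j\<in>J. lam j * f (y j))^2 \<le> M * (\<Sum>j\<in>J. \<Sum>l\<in>J. lam j * lam l * gauss_kernel (y j) (y l))"
  shows "\<exists>c. \<forall>x. ((\<lambda>g. c g * mmono (x - a) g) has_sum f x) UNIV"
proof -
  define G where "G h = exp ((norm h)^2 / 2) * f (a + h)" for h
  have cond: "(\<Sum>j\<in>J. lam j * G (p j))^2 \<le> M * (\<Sum>j\<in>J. \<Sum>l\<in>J. lam j * lam l * exp (p j \<bullet> p l))"
    if J: "finite (J :: ((('n\<Rightarrow>nat)\<times>real)\<times>('n\<Rightarrow>nat)) option set)" for J lam p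
  proof -
    define lam' where "lam' j = lam j * exp ((norm (p j))^2 / 2)" for j
    have "(\<Sum>j\<in>J. lam j * G (p j)) = (\<Sum>j\<in>J. lam' j * f (a + p j))"
      unfolding G_def lam'_def by (simp add: mult_ac)
    moreover have "(\<Sum>j\<in>J. \<Sum>l\<in>J. lam' j * lam' l * gauss_kernel (a + p j) (a + p l))
        = (\<Sum>j\<in>J. \<Sum>l\<in>J. lam j * lam l * exp (p j \<bullet> p l))"
    proof (intro sum.cong refl)
      fix j l
      show "lam' j * lam' l * gauss_kernel (a + p j) (a + p l) = lam j * lam l * exp (p j \<bullet> p l)"
        unfolding lam'_def using gauss_shift[of "p j" "p l" a] by (simp add: mult_ac)
    qed
    ultimately show ?thesis using W[OF J, of lam' "\<lambda>j. a + p j"] by simp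
  qed
  obtain cG where cG: "\<And>h. ((\<lambda>g. cG g * mmono h g) has_sum G h) UNIV"
    using P_main[OF M cond] by blast
  show ?thesis
  proof (intro exI allI)
    fix x
    have "((\<lambda>g. conv (\<lambda>g. \<Prod>i\<in>UNIV. ge (g i)) cG g * mmono (x - a) g) has_sum
            (exp (- ((norm (x - a))^2) / 2) * G (x - a))) UNIV"
      by (rule cauchy_product[OF gauss_series cG])
    moreover have "exp (- ((norm (x - a))^2) / 2) * G (x - a) = f x"
      unfolding G_def by (simp add: exp_minus field_simps)
    ultimately show "((\<lambda>g. conv (\<lambda>g. \<Prod>i\<in>UNIV. ge (g i)) cG g * mmono (x - a) g) has_sum f x) UNIV"
      by simp
  qed
qed



theorem lemma2:
  fixes F :: "real ^ 'n \<Rightarrow> real ^ 'n"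
    and H :: "(real ^ 'n \<Rightarrow> real) set"
    and ip :: "(real ^ 'n \<Rightarrow> real) \<Rightarrow> (real ^ 'n \<Rightarrow> real) \<Rightarrow> real"
  assumes rkhs: "is_rkhs gauss_kernel H ip"
    and maps: "\<forall>g\<in>H. g \<circ> F \<in> H"
    and bounded: "\<exists>C. \<forall>g\<in>H. sqrt (ip (g \<circ> F) (g \<circ> F)) \<le> C * sqrt (ip g g)"
  shows "\<forall>i. real_analytic_on (\<lambda>x. F x $ i) UNIV"
proof (intro allI)
  fix i :: 'n
  obtain C where bC: "\<forall>g\<in>H. sqrt (ip (g \<circ> F) (g \<circ> F)) \<le> C * sqrt (ip g g)"
    using bounded by blast
  define p where "p x = gauss_kernel (F x) 0" for x
  define q where "q x = (F x)$i * gauss_kernel (F x) 0" for x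
  have Mp: "(1::real) * C^2 \<ge> 0" by simp
  have Wp: "(\<Sum>j\<in>J. lam j * p (y j))^2 \<le> (1 * C^2) * (\<Sum>j\<in>J. \<Sum>l\<in>J. lam j * lam l * gauss_kernel (y j) (y l))"
    if "finite (J :: ((('n\<Rightarrow>nat)\<times>real)\<times>('n\<Rightarrow>nat)) option set)" for J lam y
    unfolding p_def
    by (rule comp_W[OF rkhs maps bC _ _ that, where phi="\<lambda>z. gauss_kernel z 0"])
       (simp_all add: W_ker0[OF rkhs, simplified])
  have Wq: "(\<Sum>j\<in>J. lam j * q (y j))^2 \<le> (1 * C^2) * (\<Sum>j\<in>J. \<Sum>l\<in>J. lam j * lam l * gauss_kernel (y j) (y l))"
    if "finite (J :: ((('n\<Rightarrow>nat)\<times>real)\<times>('n\<Rightarrow>nat)) option set)" for J lam y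
    unfolding q_def
    by (rule comp_W[OF rkhs maps bC _ _ that, where phi="\<lambda>z. z$i * gauss_kernel z 0"])
       (simp_all add: W_phi[OF rkhs, simplified])
  show "real_analytic_on (\<lambda>x. F x $ i) UNIV"
    unfolding real_analytic_on_def
  proof (intro ballI)
    fix a :: "real^'n"
    obtain cp where cp: "\<And>x. ((\<lambda>g. cp g * mmono (x - a) g) has_sum p x) UNIV"
      using W_analytic[OF Mp Wp, of a] by blast
    obtain cq where cq: "\<And>x. ((\<lambda>g. cq g * mmono (x - a) g) has_sum q x) UNIV"
      using W_analytic[OF Mp Wq, of a] by blast
    have ser: "((\<lambda>g. cp g * mmono h g) has_sum p (a + h)) UNIV" if "norm h < 1" for h
      using cp[of "a + h"] by simp
    have pos: "p x > 0" for x unfolding p_def gauss_kernel_def by simp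
    obtain r' d where r': "r' > 0"
      and d: "\<And>h. norm h < r' \<Longrightarrow> ((\<lambda>g. d g * mmono h g) has_sum (1 / p (a + h))) UNIV"
      using recip_series[of 1 cp "\<lambda>h. p (a + h)", OF _ ser] pos[of a] by force
    show "\<exists>r>0. \<exists>c. \<forall>x\<in>ball a r. ((\<lambda>\<alpha>. c \<alpha> * (\<Prod>i\<in>UNIV. (x $ i - a $ i) ^ \<alpha> i)) has_sum F x $ i) UNIV"
    proof (intro exI[of _ r'] conjI r' exI[of _ "conv cq d"] ballI)
      fix x assume x: "x \<in> ball a r'"
      have nx: "norm (x - a) < r'" using x by (simp add: dist_norm norm_minus_commute)
      have "((\<lambda>g. conv cq d g * mmono (x - a) g) has_sum (q x * (1 / p (a + (x - a))))) UNIV"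
        by (rule cauchy_product[OF cq d[OF nx]])
      moreover have "q x * (1 / p (a + (x - a))) = F x $ i"
        using pos[of x] unfolding q_def p_def by simp
      moreover have "mmono (x - a) g = (\<Prod>i\<in>UNIV. (x $ i - a $ i) ^ g i)" for g
        by (simp add: mmono_def)
      ultimately show "((\<lambda>\<alpha>. conv cq d \<alpha> * (\<Prod>i\<in>UNIV. (x $ i - a $ i) ^ \<alpha> i)) has_sum F x $ i) UNIV"
        by simp
    qed
  qed
qed


end
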